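(* Let $\alpha\in[0,1)$. Suppose $K\colon\Delta\to\mathbb R$ is bounded everywhere, nonzero on the diagonal $\{(x,x);0\leq x\leq1\}$, and Lipschitz continuous in some neighborhood of the diagonal. If $f\in L^1([0,1])$ satisfies $I^\alpha_Kf(x)=0$ for almost all $x\geq r$ for some $r\in[0,1)$, then $f(x)=0$ for almost all $x\geq r$. In particular, $I^\alpha_K\colon L^1([0,1])\to L^1([0,1])$ is injective.
   Context: $\Delta=\{(x,y);0\leq x\leq y\leq1\}$. $I^\alpha_Kf(x)=\int_x^1(y-x)^{-\alpha}K(x,y)f(y)\,dy$ for $x\in[0,1)$ and $I^\alpha_Kf(1)=0$. *)

theory Defs
  imports "HOL-Analysis.Analysis"
begin

definition Delta :: "(real \<times> real) set" where
  "Delta = {(x, y). 0 \<le> x \<and> x \<le> y \<and> y \<le> 1}"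

definition diagonal01 :: "(real \<times> real) set" where
  "diagonal01 = {(x, x) | x. 0 \<le> x \<and> x \<le> 1}"

definition IK :: "real \<Rightarrow> (real \<times> real \<Rightarrow> real) \<Rightarrow> (real \<Rightarrow> real) \<Rightarrow> real \<Rightarrow> real" where
  "IK \<alpha> K f x = (if x < 1
      then (LINT y:{x..1}|lebesgue. (y - x) powr (- \<alpha>) * K (x, y) * f y)
      else 0)"

end

theory Submission
  imports Defs
begin
lemma cont_prod_ai:
  fixes m f :: "real \<Rightarrow> real"
  assumes "continuous_on {u..v} m" "f absolutely_integrable_on {u..v}"
  shows "(\<lambda>y. m y * f y) absolutely_integrable_on {u..v}"
  by (rule absolutely_integrable_bounded_measurable_product_real)
     (auto intro: continuous_imp_measurable_on_sets_lebesgue assms compact_continuous_image compact_imp_bounded)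

lemma abs_int_abs_sub:
  fixes f :: "real \<Rightarrow> real"
  assumes "f absolutely_integrable_on {a..s}" "a \<le> u" "v \<le> s"
  shows "(\<lambda>y. \<bar>f y\<bar>) integrable_on {u..v}" "integral {u..v} (\<lambda>y. \<bar>f y\<bar>) \<le> integral {a..s} (\<lambda>y. \<bar>f y\<bar>)"
proof -
  have i: "(\<lambda>y. \<bar>f y\<bar>) integrable_on {a..s}"
  proof -
    have "(\<lambda>x. norm (f x)) integrable_on {a..s}" using assms(1) absolutely_integrable_on_def by blast
    then show ?thesis by (simp add: real_norm_def)
  qed
  show "(\<lambda>y. \<bar>f y\<bar>) integrable_on {u..v}"
    by (rule integrable_on_subinterval[OF i]) (use assms in auto)
  then show "integral {u..v} (\<lambda>y. \<bar>f y\<bar>) \<le> integral {a..s} (\<lambda>y. \<bar>f y\<bar>)"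
    by (intro integral_subset_le i) (use assms in auto)
qed

lemma hk_abs_bound:
  fixes f g :: "real \<Rightarrow> real"
  assumes "f integrable_on S" "g integrable_on S" "\<And>x. x \<in> S \<Longrightarrow> \<bar>f x\<bar> \<le> g x"
  shows "\<bar>integral S f\<bar> \<le> integral S g"
  using Henstock_Kurzweil_Integration.integral_norm_bound_integral[of f S g] assms by (simp add: real_norm_def)

lemma core_step:
  fixes f :: "real \<Rightarrow> real" and M :: "real \<Rightarrow> real \<Rightarrow> real"
  assumes as: "a < s" and fi: "f absolutely_integrable_on {a..s}"
    and Mc: "\<And>t. t \<in> {a..s} \<Longrightarrow> continuous_on {t..s} (M t)"
    and M1: "\<And>t t' y. a \<le> t \<Longrightarrow> t \<le> t' \<Longrightarrow> t' \<le> y \<Longrightarrow> y \<le> s \<Longrightarrow> \<bar>M t y - M t' y\<bar> \<le> L * (t' - t)"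
    and M2: "\<And>t y. a \<le> t \<Longrightarrow> t \<le> y \<Longrightarrow> y \<le> s \<Longrightarrow> \<bar>M t y - M t t\<bar> \<le> L * (y - t)"
    and Md: "\<And>t. t \<in> {a..s} \<Longrightarrow> c \<le> \<bar>M t t\<bar>" and c: "0 < c" and L: "0 \<le> L"
    and small: "2 * L * (s - a) < c"
    and N: "negligible N" and Z: "\<And>t. t \<in> {a..s} - N \<Longrightarrow> integral {t..s} (\<lambda>y. M t y * f y) = 0"
  shows "negligible {x \<in> {a..s}. f x \<noteq> 0}"
proof -
  define F where "F = integral {a..s} (\<lambda>y. \<bar>f y\<bar>)"
  define \<kappa> where "\<kappa> = 2 * L * F / c"
  have F0: "0 \<le> F" unfolding F_def
    by (intro integral_nonneg) (use abs_int_abs_sub[OF fi order_refl order_refl] in auto)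
  have \<kappa>0: "0 \<le> \<kappa>" unfolding \<kappa>_def using L F0 c by simp
  have fsub: "f absolutely_integrable_on {u..v}" if "a \<le> u" "v \<le> s" for u v
    by (rule absolutely_integrable_on_subinterval[OF fi]) (use that in auto)
  have Mi: "(\<lambda>y. M t y * f y) absolutely_integrable_on {u..v}"
    if "a \<le> t" "t \<le> u" "v \<le> s" for t u v
  proof (cases "u \<le> v")
    case True
    have "continuous_on {u..v} (M t)"
      by (rule continuous_on_subset[OF Mc]) (use that True in auto)
    then show ?thesis using cont_prod_ai fsub that by auto
  next
    case False then show ?thesis by simp
  qed
  have claim1: "\<bar>integral {t..t'} f\<bar> \<le> \<kappa> * (t' - t)"
    if tt: "a \<le> t" "t < t'" "t' \<le> s" "t \<notin> N" "t' \<notin> N" for t t'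
  proof -
    have Ii: "(\<lambda>y. M t y * f y) integrable_on {u..v}" if "t \<le> u" "v \<le> s" for u v
      using Mi[of t u v] that tt set_lebesgue_integral_eq_integral(1) by auto
    have Ii': "(\<lambda>y. M t' y * f y) integrable_on {t'..s}"
      using Mi[of t' t' s] tt set_lebesgue_integral_eq_integral(1) by auto
    have g0: "integral {t..s} (\<lambda>y. M t y * f y) = 0" using Z tt by auto
    have g1: "integral {t'..s} (\<lambda>y. M t' y * f y) = 0" using Z tt by auto
    have comb: "integral {t..t'} (\<lambda>y. M t y * f y) + integral {t'..s} (\<lambda>y. M t y * f y)
        = integral {t..s} (\<lambda>y. M t y * f y)"
      by (rule Henstock_Kurzweil_Integration.integral_combine) (use tt Ii in auto)
    have e1: "integral {t..t'} (\<lambda>y. M t y * f y) = integral {t'..s} (\<lambda>y. (M t' y - M t y) * f y)"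
    proof -
      have "integral {t'..s} (\<lambda>y. (M t' y - M t y) * f y)
          = integral {t'..s} (\<lambda>y. M t' y * f y) - integral {t'..s} (\<lambda>y. M t y * f y)"
        by (subst integral_diff[symmetric]) (use Ii Ii' tt in \<open>auto simp: algebra_simps\<close>)
      then show ?thesis using comb g0 g1 by simp
    qed
    have fa: "(\<lambda>y. \<bar>f y\<bar>) integrable_on {u..v}" if "a \<le> u" "v \<le> s" for u v
      using abs_int_abs_sub(1)[OF fi that] .
    have fF: "integral {u..v} (\<lambda>y. \<bar>f y\<bar>) \<le> F" if "a \<le> u" "v \<le> s" for u v
      using abs_int_abs_sub(2)[OF fi that] unfolding F_def .
    have D1i: "(\<lambda>y. (M t' y - M t y) * f y) integrable_on {t'..s}"
      using integrable_diff[OF Ii' Ii[of t' s]] tt by (simp add: algebra_simps)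
    have b1: "\<bar>integral {t..t'} (\<lambda>y. M t y * f y)\<bar> \<le> L * (t' - t) * F"
    proof -
      have "\<bar>integral {t'..s} (\<lambda>y. (M t' y - M t y) * f y)\<bar> \<le> integral {t'..s} (\<lambda>y. L * (t' - t) * \<bar>f y\<bar>)"
      proof (rule hk_abs_bound)
        show "(\<lambda>y. L * (t' - t) * \<bar>f y\<bar>) integrable_on {t'..s}"
          using fa[of t' s] tt integrable_cmul[of "\<lambda>y. \<bar>f y\<bar>" "{t'..s}" "L * (t' - t)"] by auto
        show "\<bar>(M t' y - M t y) * f y\<bar> \<le> L * (t' - t) * \<bar>f y\<bar>" if "y \<in> {t'..s}" for y
        proof -
          have "\<bar>M t y - M t' y\<bar> \<le> L * (t' - t)" using M1[of t t' y] that tt by auto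
          then show ?thesis by (simp add: abs_mult abs_minus_commute mult_right_mono)
        qed
      qed (use D1i in auto)
      also have "\<dots> = L * (t' - t) * integral {t'..s} (\<lambda>y. \<bar>f y\<bar>)"
        by (rule integral_mult_right)
      also have "\<dots> \<le> L * (t' - t) * F"
        using fF[of t' s] tt L by (intro mult_left_mono) auto
      finally show ?thesis using e1 by simp
    qed
    have D2i: "(\<lambda>y. (M t t - M t y) * f y) integrable_on {t..t'}"
    proof -
      have "(\<lambda>y. M t t * f y) integrable_on {t..t'}"
        using fsub[of t t'] tt absolutely_integrable_on_def integrable_on_cmult_left by blast
      then show ?thesis using integrable_diff[OF _ Ii[of t t']] tt by (simp add: algebra_simps)
    qed
    have b2: "\<bar>integral {t..t'} (\<lambda>y. (M t t - M t y) * f y)\<bar> \<le> L * (t' - t) * F"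
    proof -
      have "\<bar>integral {t..t'} (\<lambda>y. (M t t - M t y) * f y)\<bar> \<le> integral {t..t'} (\<lambda>y. L * (t' - t) * \<bar>f y\<bar>)"
      proof (rule hk_abs_bound)
        show "(\<lambda>y. L * (t' - t) * \<bar>f y\<bar>) integrable_on {t..t'}"
          using fa[of t t'] tt integrable_cmul[of "\<lambda>y. \<bar>f y\<bar>" "{t..t'}" "L * (t' - t)"] by auto
        show "\<bar>(M t t - M t y) * f y\<bar> \<le> L * (t' - t) * \<bar>f y\<bar>" if "y \<in> {t..t'}" for y
        proof -
          have "\<bar>M t y - M t t\<bar> \<le> L * (y - t)" using M2[of t y] that tt by auto
          also have "\<dots> \<le> L * (t' - t)" using that L by (intro mult_left_mono) auto
          finally show ?thesis by (simp add: abs_mult abs_minus_commute mult_right_mono)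
        qed
      qed (use D2i in auto)
      also have "\<dots> = L * (t' - t) * integral {t..t'} (\<lambda>y. \<bar>f y\<bar>)"
        by (rule integral_mult_right)
      also have "\<dots> \<le> L * (t' - t) * F"
        using fF[of t t'] tt L by (intro mult_left_mono) auto
      finally show ?thesis .
    qed
    have "integral {t..t'} (\<lambda>y. M t t * f y) = integral {t..t'} (\<lambda>y. M t y * f y) + integral {t..t'} (\<lambda>y. (M t t - M t y) * f y)"
      by (subst integral_add[symmetric]) (use Ii[of t t'] D2i tt in \<open>auto simp: algebra_simps\<close>)
    moreover have "integral {t..t'} (\<lambda>y. M t t * f y) = M t t * integral {t..t'} f"
      by (rule integral_mult_right)
    ultimately have "M t t * integral {t..t'} f = integral {t..t'} (\<lambda>y. M t y * f y) + integral {t..t'} (\<lambda>y. (M t t - M t y) * f y)"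
      by simp
    then have "\<bar>M t t * integral {t..t'} f\<bar> \<le> \<bar>integral {t..t'} (\<lambda>y. M t y * f y)\<bar> + \<bar>integral {t..t'} (\<lambda>y. (M t t - M t y) * f y)\<bar>"
      by (metis abs_triangle_ineq)
    then have "\<bar>M t t\<bar> * \<bar>integral {t..t'} f\<bar> \<le> 2 * L * (t' - t) * F"
      using b1 b2 by (simp add: abs_mult)
    moreover have "c * \<bar>integral {t..t'} f\<bar> \<le> \<bar>M t t\<bar> * \<bar>integral {t..t'} f\<bar>"
      using Md[of t] tt by (intro mult_right_mono) auto
    ultimately have "c * \<bar>integral {t..t'} f\<bar> \<le> 2 * L * (t' - t) * F" by linarith
    then show ?thesis unfolding \<kappa>_def using c by (simp add: field_simps)
  qed
  define f0 where "f0 = (\<lambda>x. if x \<in> {a..s} then f x else 0)"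
  have f0i: "f0 integrable_on cbox u v" for u v
  proof -
    have "f0 integrable_on UNIV" unfolding f0_def
      using integrable_restrict_UNIV fi absolutely_integrable_on_def by blast
    then show ?thesis by (rule integrable_on_subcbox) auto
  qed
  obtain N2 where N2: "negligible N2"
    and N2d: "\<And>x e. \<lbrakk>x \<notin> N2; 0 < e\<rbrakk> \<Longrightarrow>
               \<exists>d>0. \<forall>h. 0 < h \<and> h < d \<longrightarrow>
                         norm(integral (cbox x (x + h *\<^sub>R One)) f0 /\<^sub>R h ^ DIM(real) - f0 x) < e"
    using integrable_ccontinuous_explicit[of f0] f0i by blast
  have claim2: "{x \<in> {a..s}. \<kappa> < \<bar>f x\<bar>} \<subseteq> N \<union> N2 \<union> {s}"
  proof
    fix x assume x: "x \<in> {x \<in> {a..s}. \<kappa> < \<bar>f x\<bar>}"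
    show "x \<in> N \<union> N2 \<union> {s}"
    proof (rule ccontr)
      assume nx: "x \<notin> N \<union> N2 \<union> {s}"
      then have xs: "a \<le> x" "x < s" "x \<notin> N" "x \<notin> N2" using x by auto
      define e where "e = \<bar>f x\<bar> - \<kappa>"
      have e: "0 < e" using x e_def by auto
      obtain d where d: "d > 0" and dd: "\<And>h. 0 < h \<Longrightarrow> h < d \<Longrightarrow>
          norm(integral (cbox x (x + h *\<^sub>R One)) f0 /\<^sub>R h ^ DIM(real) - f0 x) < e"
        using N2d[OF xs(4) e] by blast
      define m where "m = min d (s - x)"
      have m: "0 < m" using d xs by (auto simp: m_def)
      have "\<not> {x<..<x+m} \<subseteq> N"
      proof
        assume "{x<..<x+m} \<subseteq> N"
        then have "negligible {x<..<x+m}" using N negligible_subset by blast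
        moreover have "{x<..<x+m} \<noteq> {}" using m by auto
        ultimately show False using open_not_negligible[of "{x<..<x+m}"] by auto
      qed
      then obtain t' where t': "x < t'" "t' < x + m" "t' \<notin> N" by (auto simp: subset_eq)
      define h where "h = t' - x"
      have h: "0 < h" "h < d" using t' m_def h_def by auto
      have eq1: "cbox x (x + h *\<^sub>R One) = {x..t'}" by (simp add: h_def)
      have eq2: "integral {x..t'} f0 = integral {x..t'} f"
        by (rule integral_cong) (use xs t' m_def in \<open>auto simp: f0_def\<close>)
      have B0: "\<bar>integral {x..t'} f / h - f x\<bar> < e"
      proof -
        have hh: "x + h *\<^sub>R One = t'" by (simp add: h_def)
        have "norm(integral (cbox x (x + h *\<^sub>R One)) f0 /\<^sub>R h ^ DIM(real) - f0 x) < e"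
          using dd[OF h] .
        then have "norm(integral {x..t'} f0 /\<^sub>R h - f0 x) < e"
          unfolding hh by (simp add: cbox_interval)
        then show ?thesis using eq2 xs by (simp add: f0_def divide_inverse mult.commute real_norm_def)
      qed
      have "\<bar>integral {x..t'} f\<bar> \<le> \<kappa> * h"
        using claim1[of x t'] xs t' m_def h_def by auto
      then have Q: "\<bar>integral {x..t'} f / h\<bar> \<le> \<kappa>"
        using h by (simp add: abs_divide pos_divide_le_eq)
      have A: "integral {x..t'} f / h \<le> \<kappa> \<and> - (integral {x..t'} f / h) \<le> \<kappa>"
        using Q[unfolded abs_le_iff] .
      have B: "integral {x..t'} f / h - f x < e \<and> - (integral {x..t'} f / h - f x) < e"
        using B0[unfolded abs_less_iff] .
      have "\<bar>f x\<bar> < \<kappa> + e"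
        unfolding abs_less_iff using A B by linarith
      then show False using e_def by simp
    qed
  qed
  have negb: "negligible {x \<in> {a..s}. \<kappa> < \<bar>f x\<bar>}"
    by (rule negligible_subset[OF _ claim2]) (use N N2 in auto)
  have Fle: "F \<le> \<kappa> * (s - a)"
  proof -
    define f1 where "f1 = (\<lambda>y. if \<kappa> < \<bar>f y\<bar> then 0 else \<bar>f y\<bar>)"
    have sp: "f1 y = \<bar>f y\<bar>" if "y \<in> {a..s} - {x \<in> {a..s}. \<kappa> < \<bar>f x\<bar>}" for y
      using that by (auto simp: f1_def)
    have i1: "f1 integrable_on {a..s}"
      by (rule integrable_spike[OF abs_int_abs_sub(1)[OF fi order_refl order_refl] negb]) (use sp in auto)
    have "F = integral {a..s} f1" unfolding F_def
      by (rule integral_spike[OF negb]) (use sp in auto)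
    also have "\<dots> \<le> integral {a..s} (\<lambda>y. \<kappa>)"
      by (rule integral_le[OF i1]) (use \<kappa>0 in \<open>auto simp: f1_def\<close>)
    also have "\<dots> = \<kappa> * (s - a)" using as by simp
    finally show ?thesis .
  qed
  have "F = 0"
  proof (rule ccontr)
    assume "F \<noteq> 0" then have Fp: "0 < F" using F0 by auto
    have "F \<le> (2 * L * (s - a) / c) * F" using Fle unfolding \<kappa>_def by (simp add: field_simps)
    also have "\<dots> < 1 * F" using small c Fp by (intro mult_strict_right_mono) (auto simp: field_simps)
    finally show False by simp
  qed
  then have "\<kappa> = 0" unfolding \<kappa>_def by simp
  then show ?thesis using negb by simp
qed

definition wfun :: "real \<Rightarrow> real \<Rightarrow> real" where
  "wfun \<alpha> u = u powr (\<alpha> - 1) * (1 - u) powr (- \<alpha>)"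

lemma wfun_nonneg: "0 \<le> wfun \<alpha> u" unfolding wfun_def by simp

lemma wfun_int:
  assumes "0 < \<alpha>" "\<alpha> < 1"
  shows "set_integrable lborel {0<..<1} (wfun \<alpha>)"
    "(LINT u:{0<..<1}|lborel. wfun \<alpha> u) = Beta \<alpha> (1 - \<alpha>)"
    "0 < Beta \<alpha> (1 - \<alpha>)"
proof -
  have "set_integrable lborel {0..1} (\<lambda>t. t powr (\<alpha> - 1) * (1 - t) powr ((1 - \<alpha>) - 1))"
    using integrable_Beta[of \<alpha> "1 - \<alpha>"] assms by auto
  then have i: "set_integrable lborel {0..1} (wfun \<alpha>)"
    unfolding wfun_def by simp
  show si: "set_integrable lborel {0<..<1} (wfun \<alpha>)"
    by (rule set_integrable_subset[OF i]) auto
  have "((\<lambda>t. t powr (\<alpha> - 1) * (1 - t) powr ((1 - \<alpha>) - 1)) has_integral Beta \<alpha> (1 - \<alpha>)) {0..1}"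
    using has_integral_Beta_real[of \<alpha> "1 - \<alpha>"] assms by auto
  then have "(wfun \<alpha> has_integral Beta \<alpha> (1 - \<alpha>)) {0<..<1}"
    unfolding wfun_def has_integral_Icc_iff_Ioo by simp
  then show "(LINT u:{0<..<1}|lborel. wfun \<alpha> u) = Beta \<alpha> (1 - \<alpha>)"
    using set_borel_integral_eq_integral(2)[OF si] integral_unique by metis
  show "0 < Beta \<alpha> (1 - \<alpha>)"
    using assms by (simp add: Beta_def)
qed

lemma subst_affine:
  fixes g :: "real \<Rightarrow> real"
  assumes ty: "t < y"
  shows "(\<integral>x. indicator {t<..<y} x * ((x - t) powr (\<alpha> - 1) * (y - x) powr (- \<alpha>) * g x) \<partial>lborel)
       = (\<integral>u. indicator {0<..<1} u * (wfun \<alpha> u * g (t + (y - t) * u)) \<partial>lborel)" (is "?L = ?R")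
    "integrable lborel (\<lambda>x. indicator {t<..<y} x * ((x - t) powr (\<alpha> - 1) * (y - x) powr (- \<alpha>) * g x))
     \<longleftrightarrow> integrable lborel (\<lambda>u. indicator {0<..<1} u * (wfun \<alpha> u * g (t + (y - t) * u)))"
proof -
  define c where "c = y - t"
  have c: "0 < c" using ty c_def by simp
  define F where "F = (\<lambda>x. indicator {t<..<y} x * ((x - t) powr (\<alpha> - 1) * (y - x) powr (- \<alpha>) * g x))"
  define H where "H = (\<lambda>u. indicator {0<..<1} u * (wfun \<alpha> u * g (t + (y - t) * u)))"
  have eq: "F (t + c * u) = (1 / c) * H u" for u
  proof (cases "0 < u \<and> u < 1")
    case True
    have i1: "indicator {t<..<y} (t + c * u) = (1::real)" using True c c_def
      by (auto simp: indicator_def mult_less_cancel_left1 mult_less_cancel_left2 field_simps)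
    have p1: "(t + c * u - t) powr (\<alpha> - 1) = c powr (\<alpha> - 1) * u powr (\<alpha> - 1)"
      using True c by (simp add: powr_mult)
    have p2: "(y - (t + c * u)) powr (- \<alpha>) = c powr (- \<alpha>) * (1 - u) powr (- \<alpha>)"
    proof -
      have "y - (t + c * u) = c * (1 - u)" using c_def by (simp add: algebra_simps)
      then show ?thesis using True c by (simp add: powr_mult)
    qed
    have p3: "c powr (\<alpha> - 1) * c powr (- \<alpha>) = 1 / c"
    proof -
      have "c powr (\<alpha> - 1) * c powr (- \<alpha>) = c powr ((\<alpha> - 1) + (- \<alpha>))"
        by (rule powr_add[symmetric])
      also have "\<dots> = c powr (- 1)" by simp
      also have "\<dots> = 1 / c" using c by (simp add: powr_minus_divide)
      finally show ?thesis .
    qed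
    have d1: "t + c * u - t = c * u" by simp
    have d2: "y - (t + c * u) = c * (1 - u)" using c_def by (simp add: algebra_simps)
    have "F (t + c * u) = (c * u) powr (\<alpha> - 1) * (c * (1 - u)) powr (- \<alpha>) * g (t + c * u)"
      unfolding F_def i1 d1 d2 by simp
    also have "\<dots> = (c powr (\<alpha> - 1) * c powr (- \<alpha>)) * (u powr (\<alpha> - 1) * (1 - u) powr (- \<alpha>) * g (t + c * u))"
      using True c by (simp add: powr_mult)
    also have "\<dots> = (1 / c) * H u"
      unfolding p3 H_def wfun_def c_def[symmetric] using True by simp
    finally show ?thesis .
  next
    case False
    have "c * u \<le> 0 \<or> c * 1 \<le> c * u"
    proof (cases "u \<le> 0")
      case True then show ?thesis using c by (simp add: mult_nonneg_nonpos)
    next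
      case F2: False
      then have "1 \<le> u" using False by auto
      then show ?thesis using c by (intro disjI2 mult_left_mono) auto
    qed
    then have i0: "indicator {t<..<y} (t + c * u) = (0::real)" using c_def
      by (auto simp: indicator_def)
    have i1: "indicator {0<..<1} u = (0::real)" using False by (simp add: indicator_def)
    show ?thesis unfolding F_def H_def i0 i1 by simp
  qed
  have "?L = \<bar>c\<bar> *\<^sub>R (\<integral>u. F (t + c * u) \<partial>lborel)"
    unfolding F_def[symmetric] using lborel_integral_real_affine[of c F t] c by simp
  also have "\<dots> = c * ((1 / c) * (\<integral>u. H u \<partial>lborel))"
    using c by (simp add: eq)
  also have "\<dots> = ?R" using c unfolding H_def by simp
  finally show "?L = ?R" .
  have "integrable lborel F \<longleftrightarrow> integrable lborel (\<lambda>u. F (t + c * u))"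
    using lborel_integrable_real_affine_iff[of c F t] c by simp
  also have "\<dots> \<longleftrightarrow> integrable lborel (\<lambda>u. (1 / c) * H u)" by (simp add: eq)
  also have "\<dots> \<longleftrightarrow> integrable lborel H" using c integrable_mult_left_iff[of lborel "1 / c" H] by simp
  finally show "integrable lborel F \<longleftrightarrow> integrable lborel H" .
qed

lemma wfun_meas[measurable]: "wfun \<alpha> \<in> borel_measurable borel"
  unfolding wfun_def by measurable

lemma int_wg:
  fixes g :: "real \<Rightarrow> real"
  assumes a: "0 < \<alpha>" "\<alpha> < 1" and g: "g \<in> borel_measurable borel" and gB: "\<And>x. \<bar>g x\<bar> \<le> B"
  shows "integrable lborel (\<lambda>u. indicator {0<..<1} u * (wfun \<alpha> u * g u))"
    "\<bar>\<integral>u. indicator {0<..<1} u * (wfun \<alpha> u * g u) \<partial>lborel\<bar> \<le> B * Beta \<alpha> (1 - \<alpha>)"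
proof -
  have wi: "integrable lborel (\<lambda>u. indicator {0<..<1} u * wfun \<alpha> u)"
    using wfun_int(1)[OF a] unfolding set_integrable_def by simp
  have wB: "integrable lborel (\<lambda>u. B * (indicator {0<..<1} u * wfun \<alpha> u))"
    using wi by simp
  have bnd: "norm (indicator {0<..<1} u * (wfun \<alpha> u * g u)) \<le> B * (indicator {0<..<1} u * wfun \<alpha> u)" for u
  proof -
    have "\<bar>wfun \<alpha> u * g u\<bar> \<le> wfun \<alpha> u * B"
      using gB[of u] wfun_nonneg[of \<alpha> u] by (simp add: abs_mult mult_left_mono)
    then show ?thesis by (auto simp: indicator_def abs_mult mult.commute)
  qed
  show i: "integrable lborel (\<lambda>u. indicator {0<..<1} u * (wfun \<alpha> u * g u))"
    by (rule Bochner_Integration.integrable_bound[OF wB]) (use g bnd in \<open>auto intro!: AE_I2 order.trans[OF _ abs_ge_self]\<close>)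
  have "\<bar>\<integral>u. indicator {0<..<1} u * (wfun \<alpha> u * g u) \<partial>lborel\<bar> \<le> (\<integral>u. B * (indicator {0<..<1} u * wfun \<alpha> u) \<partial>lborel)"
    by (rule integral_abs_bound_integral[OF i wB]) (use bnd in auto)
  also have "\<dots> = B * Beta \<alpha> (1 - \<alpha>)"
    using wfun_int(2)[OF a] unfolding set_lebesgue_integral_def by simp
  finally show "\<bar>\<integral>u. indicator {0<..<1} u * (wfun \<alpha> u * g u) \<partial>lborel\<bar> \<le> B * Beta \<alpha> (1 - \<alpha>)" .
qed

lemma swapG_meas:
  fixes G :: "real \<times> real \<Rightarrow> real"
  assumes "G \<in> borel_measurable borel"
  shows "(\<lambda>p. G (snd p, fst p)) \<in> borel_measurable (lborel \<Otimes>\<^sub>M lborel)"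
proof -
  have sw: "(\<lambda>p::real\<times>real. (snd p, fst p)) \<in> borel \<rightarrow>\<^sub>M borel"
    by (intro borel_measurable_continuous_onI continuous_intros)
  have "(\<lambda>p. G (snd p, fst p)) \<in> borel_measurable borel"
    using measurable_compose[OF sw assms] by (simp add: o_def)
  then show ?thesis by (simp add: lborel_prod measurable_lborel1)
qed

lemma meas_test:
  fixes G :: "real \<times> real \<Rightarrow> real" and hb :: "real \<Rightarrow> real"
  assumes G: "G \<in> borel_measurable borel" and [measurable]: "hb \<in> borel_measurable borel"
  shows "(\<lambda>(y, x). indicator {t<..<s} y * hb y * (indicator {t<..<y} x * ((x - t) powr (\<alpha> - 1) * (y - x) powr (- \<alpha>) * G (x, y))))
     \<in> borel_measurable (lborel \<Otimes>\<^sub>M lborel)"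
  using swapG_meas[OF G] unfolding indicator_def greaterThanLessThan_iff case_prod_beta by measurable


lemma G_comp:
  fixes G :: "real \<times> real \<Rightarrow> real" and \<phi> :: "real \<Rightarrow> real \<times> real"
  assumes "G \<in> borel_measurable borel" "continuous_on UNIV \<phi>"
  shows "(\<lambda>u. G (\<phi> u)) \<in> borel_measurable borel"
proof -
  have "\<phi> \<in> borel \<rightarrow>\<^sub>M borel" by (rule borel_measurable_continuous_onI[OF assms(2)])
  then show ?thesis by (rule measurable_compose[OF _ assms(1)])
qed

lemma P_facts:
  fixes G :: "real \<times> real \<Rightarrow> real"
  assumes a: "0 < \<alpha>" "\<alpha> < 1" and G: "G \<in> borel_measurable borel" and GB: "\<And>p. \<bar>G p\<bar> \<le> B"
    and ty: "t < y"
  defines "P \<equiv> (\<lambda>x. indicator {t<..<y} x * ((x - t) powr (\<alpha> - 1) * (y - x) powr (- \<alpha>) * G (x, y)))"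
  shows "integrable lborel P"
    "(\<integral>x. P x \<partial>lborel) = (\<integral>u. indicator {0<..<1} u * (wfun \<alpha> u * G (t + (y - t) * u, y)) \<partial>lborel)"
    "(\<integral>x. \<bar>P x\<bar> \<partial>lborel) \<le> B * Beta \<alpha> (1 - \<alpha>)"
proof -
  have gm: "(\<lambda>u. G (t + (y - t) * u, y)) \<in> borel_measurable borel"
    by (rule G_comp[OF G]) (intro continuous_intros)
  have gm2: "(\<lambda>u. \<bar>G (t + (y - t) * u, y)\<bar>) \<in> borel_measurable borel"
    using gm by measurable
  have "integrable lborel (\<lambda>u. indicator {0<..<1} u * (wfun \<alpha> u * G (t + (y - t) * u, y)))"
    using int_wg(1)[OF a gm GB] .
  then show "integrable lborel P" unfolding P_def using subst_affine(2)[OF ty, of \<alpha> "\<lambda>x. G (x, y)"] by simp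
  show "(\<integral>x. P x \<partial>lborel) = (\<integral>u. indicator {0<..<1} u * (wfun \<alpha> u * G (t + (y - t) * u, y)) \<partial>lborel)"
    unfolding P_def using subst_affine(1)[OF ty, of \<alpha> "\<lambda>x. G (x, y)"] by simp
  have ab: "\<bar>P x\<bar> = indicator {t<..<y} x * ((x - t) powr (\<alpha> - 1) * (y - x) powr (- \<alpha>) * \<bar>G (x, y)\<bar>)" for x
    unfolding P_def by (simp add: abs_mult indicator_def)
  have "(\<integral>x. \<bar>P x\<bar> \<partial>lborel) = (\<integral>u. indicator {0<..<1} u * (wfun \<alpha> u * \<bar>G (t + (y - t) * u, y)\<bar>) \<partial>lborel)"
    unfolding ab using subst_affine(1)[OF ty, of \<alpha> "\<lambda>x. \<bar>G (x, y)\<bar>"] by simp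
  also have "\<dots> \<le> B * Beta \<alpha> (1 - \<alpha>)"
    using int_wg(2)[OF a gm2, of B] GB by simp
  finally show "(\<integral>x. \<bar>P x\<bar> \<partial>lborel) \<le> B * Beta \<alpha> (1 - \<alpha>)" .
qed

lemma fubini_abel:
  fixes G :: "real \<times> real \<Rightarrow> real" and hb :: "real \<Rightarrow> real"
  assumes a: "0 < \<alpha>" "\<alpha> < 1" and ts: "t < s"
    and G: "G \<in> borel_measurable borel" and GB: "\<And>p. \<bar>G p\<bar> \<le> B"
    and hbm: "hb \<in> borel_measurable borel" and hbi: "integrable lborel hb"
    and Z: "AE x in lborel. t < x \<and> x < s \<longrightarrow>
        integrable lborel (\<lambda>y. indicator {x<..<s} y * ((y - x) powr (- \<alpha>) * G (x, y) * hb y)) \<longrightarrow>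
        (\<integral>y. indicator {x<..<s} y * ((y - x) powr (- \<alpha>) * G (x, y) * hb y) \<partial>lborel) = 0"
  shows "(\<integral>y. indicator {t<..<s} y * (hb y * (\<integral>u. indicator {0<..<1} u * (wfun \<alpha> u * G (t + (y - t) * u, y)) \<partial>lborel)) \<partial>lborel) = 0"
proof -
  define P where "P = (\<lambda>y x. indicator {t<..<y} x * ((x - t) powr (\<alpha> - 1) * (y - x) powr (- \<alpha>) * G (x, y)))"
  define \<Phi> where "\<Phi> = (\<lambda>y x. indicator {t<..<s} y * hb y * P y x)"
  have \<Phi>m: "(\<lambda>(y, x). \<Phi> y x) \<in> borel_measurable (lborel \<Otimes>\<^sub>M lborel)"
    unfolding \<Phi>_def P_def using meas_test[OF G hbm] by simp
  have B0: "0 \<le> B" using GB[of "(0,0)"] by simp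
  let ?\<beta> = "Beta \<alpha> (1 - \<alpha>)"
  have \<beta>0: "0 < ?\<beta>" using wfun_int(3)[OF a] .
  note PF = P_facts[OF a G GB]
  have int1: "integrable lborel (\<lambda>y. \<integral>x. norm (\<Phi> y x) \<partial>lborel)"
  proof (rule Bochner_Integration.integrable_bound)
    show "integrable lborel (\<lambda>y. B * ?\<beta> * hb y)" using hbi by simp
    have "(\<lambda>(y, x). norm (\<Phi> y x)) \<in> borel_measurable (lborel \<Otimes>\<^sub>M lborel)"
      using measurable_compose[OF \<Phi>m borel_measurable_norm] by (simp add: case_prod_beta)
    then show "(\<lambda>y. \<integral>x. norm (\<Phi> y x) \<partial>lborel) \<in> borel_measurable lborel"
      by (rule lborel.borel_measurable_lebesgue_integral)
    show "AE y in lborel. norm (\<integral>x. norm (\<Phi> y x) \<partial>lborel) \<le> norm (B * ?\<beta> * hb y)"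
    proof (rule AE_I2)
      fix y
      have eq0: "norm (\<Phi> y x) = (indicator {t<..<s} y * \<bar>hb y\<bar>) * \<bar>P y x\<bar>" for x
        unfolding \<Phi>_def by (simp add: abs_mult)
      have eq: "(\<integral>x. norm (\<Phi> y x) \<partial>lborel) = (indicator {t<..<s} y * \<bar>hb y\<bar>) * (\<integral>x. \<bar>P y x\<bar> \<partial>lborel)"
        unfolding eq0 by (rule integral_mult_right_zero)
      have nn: "0 \<le> (\<integral>x. \<bar>P y x\<bar> \<partial>lborel)" by simp
      show "norm (\<integral>x. norm (\<Phi> y x) \<partial>lborel) \<le> norm (B * ?\<beta> * hb y)"
      proof (cases "t < y \<and> y < s")
        case True
        have "(\<integral>x. \<bar>P y x\<bar> \<partial>lborel) \<le> B * ?\<beta>" using PF(3)[of t y] True unfolding P_def by simp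
        then show ?thesis unfolding eq using True nn B0 \<beta>0
          by (simp add: abs_mult mult_left_mono mult.commute)
      next
        case False
        then have "indicator {t<..<s} y = (0::real)" by (auto simp: indicator_def)
        then show ?thesis unfolding eq by simp
      qed
    qed
  qed
  have int2: "AE y in lborel. integrable lborel (\<lambda>x. \<Phi> y x)"
  proof (rule AE_I2)
    fix y show "integrable lborel (\<lambda>x. \<Phi> y x)"
    proof (cases "t < y")
      case True
      then show ?thesis unfolding \<Phi>_def using PF(1)[of t y] unfolding P_def by simp
    next
      case False
      then have "\<Phi> y x = 0" for x unfolding \<Phi>_def P_def by (simp add: indicator_def)
      then show ?thesis by simp
    qed
  qed
  have \<Phi>i: "integrable (lborel \<Otimes>\<^sub>M lborel) (\<lambda>(y, x). \<Phi> y x)"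
    by (rule lborel_pair.Fubini_integrable[OF \<Phi>m]) (use int1 int2 in simp_all)
  have fub: "(\<integral>x. (\<integral>y. \<Phi> y x \<partial>lborel) \<partial>lborel) = (\<integral>y. (\<integral>x. \<Phi> y x \<partial>lborel) \<partial>lborel)"
    using lborel_pair.Fubini_integral[of \<Phi>] \<Phi>i by simp
  have rhs: "(\<integral>y. (\<integral>x. \<Phi> y x \<partial>lborel) \<partial>lborel)
      = (\<integral>y. indicator {t<..<s} y * (hb y * (\<integral>u. indicator {0<..<1} u * (wfun \<alpha> u * G (t + (y - t) * u, y)) \<partial>lborel)) \<partial>lborel)"
  proof (rule Bochner_Integration.integral_cong[OF refl])
    fix y
    show "(\<integral>x. \<Phi> y x \<partial>lborel) = indicator {t<..<s} y * (hb y * (\<integral>u. indicator {0<..<1} u * (wfun \<alpha> u * G (t + (y - t) * u, y)) \<partial>lborel))"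
    proof (cases "t < y")
      case True
      then show ?thesis unfolding \<Phi>_def using PF(2)[of t y] unfolding P_def by simp
    next
      case False
      then show ?thesis unfolding \<Phi>_def P_def by (simp add: indicator_def)
    qed
  qed
  have swp: "integrable (lborel \<Otimes>\<^sub>M lborel) (\<lambda>(x, y). \<Phi> y x)"
    using lborel_pair.integrable_product_swap_iff[of "\<lambda>(y, x). \<Phi> y x"] \<Phi>i by simp
  have aes: "AE x in lborel. integrable lborel (\<lambda>y. \<Phi> y x)"
    using lborel_pair.AE_integrable_fst'[OF swp] by simp
  have "AE x in lborel. (\<integral>y. \<Phi> y x \<partial>lborel) = 0"
    using aes Z
  proof eventually_elim
    case (elim x)
    show ?case
    proof (cases "t < x \<and> x < s")
      case True
      define Q where "Q = (\<lambda>y. indicator {x<..<s} y * ((y - x) powr (- \<alpha>) * G (x, y) * hb y))"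
      define cx where "cx = (x - t) powr (\<alpha> - 1)"
      have cx: "0 < cx" using True cx_def by simp
      have \<Phi>Q: "\<Phi> y x = cx * Q y" for y
        unfolding \<Phi>_def P_def Q_def cx_def using True by (auto simp: indicator_def)
      have "integrable lborel (\<lambda>y. (1 / cx) * \<Phi> y x)" using elim(1) by simp
      then have Qi: "integrable lborel Q" using cx by (simp add: \<Phi>Q)
      then have "(\<integral>y. Q y \<partial>lborel) = 0" using elim(2) True unfolding Q_def by simp
      then show ?thesis by (simp add: \<Phi>Q)
    next
      case False
      then have "\<Phi> y x = 0" for y unfolding \<Phi>_def P_def by (auto simp: indicator_def)
      then show ?thesis by simp
    qed
  qed
  then have "(\<integral>x. (\<integral>y. \<Phi> y x \<partial>lborel) \<partial>lborel) = 0" by (rule integral_eq_zero_AE)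
  then show ?thesis using fub rhs by simp
qed

definition Dreg :: "real \<Rightarrow> (real \<times> real) set" where
  "Dreg \<delta> = {(x, y). 0 \<le> x \<and> x \<le> y \<and> y \<le> 1 \<and> y - x < \<delta>}"

lemma dist_pair_le: "dist (a, b) (c, d) \<le> \<bar>a - c\<bar> + \<bar>b - (d::real)\<bar>"
  using sqrt_sum_squares_le_sum_abs[of "a - c" "b - d"]
  by (simp add: dist_Pair_Pair dist_real_def)

lemma Dreg_mem: "0 \<le> x \<Longrightarrow> x \<le> y \<Longrightarrow> y \<le> 1 \<Longrightarrow> y - x < \<delta> \<Longrightarrow> (x, y) \<in> Dreg \<delta>"
  by (simp add: Dreg_def)

lemma step_zero:
  fixes K :: "real \<times> real \<Rightarrow> real" and h :: "real \<Rightarrow> real"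
  assumes Klip: "\<And>p q. p \<in> Dreg \<delta> \<Longrightarrow> q \<in> Dreg \<delta> \<Longrightarrow> \<bar>K p - K q\<bar> \<le> L * dist p q"
    and Kdiag: "\<And>x. x \<in> {0..1} \<Longrightarrow> c \<le> \<bar>K (x, x)\<bar>" and c: "0 < c" and L: "0 \<le> L"
    and ra: "0 \<le> a" "a < s" "s \<le> 1" "s - a < \<delta>" and small: "4 * L * (s - a) < c"
    and hi: "h absolutely_integrable_on {a..s}"
    and N1: "negligible N1"
    and J0: "\<And>x. x \<in> {a..s} - N1 \<Longrightarrow> integral {x..s} (\<lambda>y. (y - x) powr (- 0) * K (x, y) * h y) = 0"
  shows "negligible {y \<in> {a..s}. h y \<noteq> 0}"
proof (rule core_step[OF ra(2) hi, where M = "\<lambda>t y. K (t, y)" and L = L and c = c and N = N1])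
  fix t assume t: "t \<in> {a..s}"
  show "continuous_on {t..s} (\<lambda>y. K (t, y))"
  proof (rule lipschitz_on_continuous_on[of L])
    show "L-lipschitz_on {t..s} (\<lambda>y. K (t, y))"
    proof (rule lipschitz_onI[OF _ L])
      fix y y' assume "y \<in> {t..s}" "y' \<in> {t..s}"
      then have "(t, y) \<in> Dreg \<delta>" "(t, y') \<in> Dreg \<delta>" using t ra by (auto intro!: Dreg_mem)
      then have "\<bar>K (t, y) - K (t, y')\<bar> \<le> L * dist (t, y) (t, y')" using Klip by blast
      then show "dist (K (t, y)) (K (t, y')) \<le> L * dist y y'"
        by (simp add: dist_real_def dist_Pair_Pair)
    qed
  qed
next
  fix t t' y assume tt: "a \<le> t" "t \<le> t'" "t' \<le> y" "y \<le> s"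
  then have "(t, y) \<in> Dreg \<delta>" "(t', y) \<in> Dreg \<delta>" using ra by (auto intro!: Dreg_mem)
  then have "\<bar>K (t, y) - K (t', y)\<bar> \<le> L * dist (t, y) (t', y)" using Klip by blast
  then show "\<bar>K (t, y) - K (t', y)\<bar> \<le> L * (t' - t)"
    using tt by (simp add: dist_real_def dist_Pair_Pair)
next
  fix t y assume tt: "a \<le> t" "t \<le> y" "y \<le> s"
  then have "(t, y) \<in> Dreg \<delta>" "(t, t) \<in> Dreg \<delta>" using ra by (auto intro!: Dreg_mem)
  then have "\<bar>K (t, y) - K (t, t)\<bar> \<le> L * dist (t, y) (t, t)" using Klip by blast
  then show "\<bar>K (t, y) - K (t, t)\<bar> \<le> L * (y - t)"
    using tt by (simp add: dist_real_def dist_Pair_Pair)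
next
  fix t assume "t \<in> {a..s}" then show "c \<le> \<bar>K (t, t)\<bar>" using Kdiag ra by auto
next
  have "0 \<le> L * (s - a)" using L ra by simp
  then show "2 * L * (s - a) < c" using small by linarith
next
  fix t assume t: "t \<in> {a..s} - N1"
  have "integral {t..s} (\<lambda>y. K (t, y) * h y) = integral {t..s} (\<lambda>y. (y - t) powr (- 0) * K (t, y) * h y)"
    by (rule integral_spike[of "{t}"]) auto
  then show "integral {t..s} (\<lambda>y. K (t, y) * h y) = 0" using J0[OF t] by simp
qed (use c L N1 in auto)

lemma aff_in_D:
  assumes "0 \<le> t" "t \<le> y" "y \<le> 1" "y - t < \<delta>" "0 < u" "u < 1"
  shows "(t + (y - t) * u, y) \<in> Dreg \<delta>"
proof -
  have a1: "0 \<le> (y - t) * u" using assms by simp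
  have a2: "(y - t) * u \<le> (y - t)" using assms by (intro mult_left_le) auto
  have a3: "y - (t + (y - t) * u) \<le> y - t" using a1 by linarith
  have a4: "y - (t + (y - t) * u) < \<delta>" using a3 assms(4) by linarith
  have a5: "0 \<le> t + (y - t) * u" using a1 assms(1) by linarith
  have a6: "t + (y - t) * u \<le> y" using a2 by linarith
  show ?thesis unfolding Dreg_def using a4 a5 a6 assms(3) by simp
qed

lemma aff_dist:
  fixes t y t' y' u :: real
  assumes "0 < u" "u < 1"
  shows "dist (t + (y - t) * u, y) (t' + (y' - t') * u, y') \<le> \<bar>t - t'\<bar> + 2 * \<bar>y - y'\<bar>"
proof -
  have eq: "t + (y - t) * u - (t' + (y' - t') * u) = (1 - u) * (t - t') + u * (y - y')"
    by (simp add: algebra_simps)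
  have "\<bar>(1 - u) * (t - t') + u * (y - y')\<bar> \<le> \<bar>(1 - u) * (t - t')\<bar> + \<bar>u * (y - y')\<bar>"
    by (rule abs_triangle_ineq)
  also have "\<dots> = (1 - u) * \<bar>t - t'\<bar> + u * \<bar>y - y'\<bar>" using assms by (simp add: abs_mult)
  also have "\<dots> \<le> \<bar>t - t'\<bar> + \<bar>y - y'\<bar>"
    using assms by (intro add_mono mult_left_le_one_le) auto
  finally have "\<bar>t + (y - t) * u - (t' + (y' - t') * u)\<bar> \<le> \<bar>t - t'\<bar> + \<bar>y - y'\<bar>" unfolding eq .
  then have "\<bar>t + (y - t) * u - (t' + (y' - t') * u)\<bar> + \<bar>y - y'\<bar> \<le> \<bar>t - t'\<bar> + 2 * \<bar>y - y'\<bar>"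
    by simp
  with dist_pair_le[of "t + (y - t) * u" y "t' + (y' - t') * u" y'] show ?thesis by (rule order_trans)
qed

lemma step_pos:
  fixes K :: "real \<times> real \<Rightarrow> real" and h :: "real \<Rightarrow> real"
  assumes a: "0 < \<alpha>" "\<alpha> < 1"
    and Klip: "\<And>p q. p \<in> Dreg \<delta> \<Longrightarrow> q \<in> Dreg \<delta> \<Longrightarrow> \<bar>K p - K q\<bar> \<le> L * dist p q"
    and KB: "\<And>p. p \<in> Dreg \<delta> \<Longrightarrow> \<bar>K p\<bar> \<le> B"
    and Kdiag: "\<And>x. x \<in> {0..1} \<Longrightarrow> c \<le> \<bar>K (x, x)\<bar>" and c: "0 < c" and L: "0 \<le> L"
    and ra: "0 \<le> a" "a < s" "s \<le> 1" "s - a < \<delta>" and small: "4 * L * (s - a) < c"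
    and hi: "h absolutely_integrable_on {a..s}"
    and N1: "negligible N1"
    and J0: "\<And>x. x \<in> {a..s} - N1 \<Longrightarrow> integral {x..s} (\<lambda>y. (y - x) powr (- \<alpha>) * K (x, y) * h y) = 0"
  shows "negligible {y \<in> {a..s}. h y \<noteq> 0}"
proof -
  define Kd where "Kd = (\<lambda>p. indicator (Dreg \<delta>) p * K p)"
  have \<delta>: "0 < \<delta>" using ra by simp
  have B0: "0 \<le> B" using KB[of "(0, 0)"] \<delta> by (auto simp: Dreg_def)
  have Dborel: "Dreg \<delta> \<in> sets borel"
  proof -
    have "Dreg \<delta> = {p. 0 \<le> fst p \<and> fst p \<le> snd p \<and> snd p \<le> 1} \<inter> {p. snd p - fst p < \<delta>}"
      by (auto simp: Dreg_def)
    moreover have "closed {p::real \<times> real. 0 \<le> fst p \<and> fst p \<le> snd p \<and> snd p \<le> 1}"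
      by (intro closed_Collect_conj closed_Collect_le continuous_intros)
    moreover have "open {p::real \<times> real. snd p - fst p < \<delta>}"
      by (intro open_Collect_less continuous_intros)
    ultimately show ?thesis by auto
  qed
  have Kcont: "continuous_on (Dreg \<delta>) K"
  proof (rule lipschitz_on_continuous_on[of L])
    show "L-lipschitz_on (Dreg \<delta>) K"
      by (rule lipschitz_onI[OF _ L]) (use Klip in \<open>simp add: dist_real_def\<close>)
  qed
  have Kdm: "Kd \<in> borel_measurable borel"
    using borel_measurable_continuous_on_indicator[OF Dborel Kcont] unfolding Kd_def by simp
  have KdB: "\<bar>Kd p\<bar> \<le> B" for p
    using KB[of p] B0 by (auto simp: Kd_def indicator_def)
  have KdK: "Kd p = K p" if "p \<in> Dreg \<delta>" for p using that by (simp add: Kd_def)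
  let ?\<beta> = "Beta \<alpha> (1 - \<alpha>)"
  have \<beta>0: "0 < ?\<beta>" using wfun_int(3)[OF a] .
  define M where "M = (\<lambda>t y. \<integral>u. indicator {0<..<1} u * (wfun \<alpha> u * Kd (t + (y - t) * u, y)) \<partial>lborel)"
  have gm: "(\<lambda>u. Kd (t + (y - t) * u, y)) \<in> borel_measurable borel" for t y
    by (rule G_comp[OF Kdm]) (intro continuous_intros)
  have Mi: "integrable lborel (\<lambda>u. indicator {0<..<1} u * (wfun \<alpha> u * Kd (t + (y - t) * u, y)))" for t y
    using int_wg(1)[OF a gm KdB] .
  have MB: "\<bar>M t y\<bar> \<le> B * ?\<beta>" for t y
    unfolding M_def using int_wg(2)[OF a gm KdB] .
  have ME: "\<bar>M t y - M t' y'\<bar> \<le> ?\<beta> * (L * (\<bar>t - t'\<bar> + 2 * \<bar>y - y'\<bar>))"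
    if tt: "a \<le> t" "t \<le> y" "y \<le> s" "a \<le> t'" "t' \<le> y'" "y' \<le> s" for t y t' y'
  proof -
    define g where "g = (\<lambda>u. indicator {0<..<1} u * (Kd (t + (y - t) * u, y) - Kd (t' + (y' - t') * u, y')))"
    have gmeas: "g \<in> borel_measurable borel" unfolding g_def using gm by measurable
    have gB: "\<bar>g u\<bar> \<le> L * (\<bar>t - t'\<bar> + 2 * \<bar>y - y'\<bar>)" for u
    proof (cases "0 < u \<and> u < 1")
      case True
      have p1: "(t + (y - t) * u, y) \<in> Dreg \<delta>" using tt ra True by (intro aff_in_D) auto
      have p2: "(t' + (y' - t') * u, y') \<in> Dreg \<delta>" using tt ra True by (intro aff_in_D) auto
      have "\<bar>g u\<bar> = \<bar>K (t + (y - t) * u, y) - K (t' + (y' - t') * u, y')\<bar>"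
        unfolding g_def using True KdK[OF p1] KdK[OF p2] by simp
      also have "\<dots> \<le> L * dist (t + (y - t) * u, y) (t' + (y' - t') * u, y')" using Klip p1 p2 by blast
      also have "\<dots> \<le> L * (\<bar>t - t'\<bar> + 2 * \<bar>y - y'\<bar>)"
        using aff_dist[of u t y t' y'] True L by (intro mult_left_mono) auto
      finally show ?thesis .
    next
      case False
      then have "indicator {0<..<1} u = (0::real)" by (simp add: indicator_def)
      then have "g u = 0" unfolding g_def by simp
      then show ?thesis using L by simp
    qed
    have "M t y - M t' y' = (\<integral>u. indicator {0<..<1} u * (wfun \<alpha> u * Kd (t + (y - t) * u, y)) -
                                 indicator {0<..<1} u * (wfun \<alpha> u * Kd (t' + (y' - t') * u, y')) \<partial>lborel)"
      unfolding M_def by (rule Bochner_Integration.integral_diff[symmetric, OF Mi Mi])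
    also have "\<dots> = (\<integral>u. indicator {0<..<1} u * (wfun \<alpha> u * g u) \<partial>lborel)"
      by (rule Bochner_Integration.integral_cong) (auto simp: g_def indicator_def algebra_simps)
    finally have eq: "M t y - M t' y' = (\<integral>u. indicator {0<..<1} u * (wfun \<alpha> u * g u) \<partial>lborel)" .
    show ?thesis unfolding eq using int_wg(2)[OF a gmeas gB] by (simp add: mult.commute)
  qed
  have Mtt: "M t t = ?\<beta> * K (t, t)" if "t \<in> {0..1}" for t
  proof -
    have "M t t = (\<integral>u. Kd (t, t) * (indicator {0<..<1} u * wfun \<alpha> u) \<partial>lborel)"
      unfolding M_def by (rule Bochner_Integration.integral_cong) (auto simp: algebra_simps)
    also have "\<dots> = Kd (t, t) * ?\<beta>"
      using wfun_int(2)[OF a] unfolding set_lebesgue_integral_def by simp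
    also have "Kd (t, t) = K (t, t)" using that \<delta> by (intro KdK) (auto simp: Dreg_def)
    finally show ?thesis by simp
  qed
  have Mcont: "continuous_on {t..s} (M t)" if t: "t \<in> {a..s}" for t
  proof (rule lipschitz_on_continuous_on[of "2 * ?\<beta> * L"])
    show "(2 * ?\<beta> * L)-lipschitz_on {t..s} (M t)"
    proof (rule lipschitz_onI)
      fix y y' assume "y \<in> {t..s}" "y' \<in> {t..s}"
      then have "\<bar>M t y - M t y'\<bar> \<le> ?\<beta> * (L * (\<bar>t - t\<bar> + 2 * \<bar>y - y'\<bar>))"
        using t by (intro ME) auto
      then show "dist (M t y) (M t y') \<le> 2 * ?\<beta> * L * dist y y'"
        by (simp add: dist_real_def algebra_simps)
    qed (use \<beta>0 L in simp)
  qed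
  show ?thesis
  proof (rule core_step[OF ra(2) hi, where M = M and L = "2 * ?\<beta> * L" and c = "?\<beta> * c" and N = "{}"])
    fix t assume "t \<in> {a..s}" then show "continuous_on {t..s} (M t)" by (rule Mcont)
  next
    fix t t' y assume tt: "a \<le> t" "t \<le> t'" "t' \<le> y" "y \<le> s"
    have "\<bar>M t y - M t' y\<bar> \<le> ?\<beta> * (L * (\<bar>t - t'\<bar> + 2 * \<bar>y - y\<bar>))" using tt by (intro ME) auto
    also have "\<dots> = ?\<beta> * L * (t' - t)" using tt by simp
    also have "\<dots> \<le> 2 * ?\<beta> * L * (t' - t)" using tt \<beta>0 L by (simp add: mult_right_mono)
    finally show "\<bar>M t y - M t' y\<bar> \<le> 2 * ?\<beta> * L * (t' - t)" .
  next
    fix t y assume tt: "a \<le> t" "t \<le> y" "y \<le> s"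
    have "\<bar>M t y - M t t\<bar> \<le> ?\<beta> * (L * (\<bar>t - t\<bar> + 2 * \<bar>y - t\<bar>))" using tt by (intro ME) auto
    also have "\<dots> = 2 * ?\<beta> * L * (y - t)" using tt by simp
    finally show "\<bar>M t y - M t t\<bar> \<le> 2 * ?\<beta> * L * (y - t)" .
  next
    fix t assume t: "t \<in> {a..s}"
    then have "t \<in> {0..1}" using ra by auto
    then show "?\<beta> * c \<le> \<bar>M t t\<bar>" using Mtt Kdiag \<beta>0 by (simp add: abs_mult)
  next
    show "0 < ?\<beta> * c" using \<beta>0 c by simp
  next
    show "0 \<le> 2 * ?\<beta> * L" using \<beta>0 L by simp
  next
    have "?\<beta> * (4 * L * (s - a)) < ?\<beta> * c" using small \<beta>0 by simp
    then show "2 * (2 * ?\<beta> * L) * (s - a) < ?\<beta> * c" by (simp add: algebra_simps)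
  next
    show "negligible {}" by simp
  next
    fix t assume t: "t \<in> {a..s} - {}"
    show "integral {t..s} (\<lambda>y. M t y * h y) = 0"
    proof (cases "t = s")
      case True then show ?thesis by simp
    next
      case False
      then have ts: "t < s" using t by auto
      define ha where "ha = (\<lambda>y. indicator {a..s} y *\<^sub>R h y)"
      have hai: "integrable lebesgue ha" using hi unfolding ha_def set_integrable_def .
      then have ham: "ha \<in> borel_measurable lebesgue" by (rule borel_measurable_integrable)
      obtain hb where hbm': "hb \<in> borel_measurable lborel" and hbae: "AE y in lborel. ha y = hb y"
        using completion_ex_borel_measurable_real[OF ham] by blast
      have hbm: "hb \<in> borel_measurable borel" using hbm' by (simp add: measurable_lborel1)
      have "integrable lebesgue hb"
        by (rule integrable_cong_AE_imp[OF hai]) (use hbm' hbae in \<open>auto intro: measurable_completion AE_completion\<close>)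
      then have hbi: "integrable lborel hb" using integrable_completion[OF hbm'] by simp
      from hbae obtain N where N': "{y \<in> space lborel. \<not> (ha y = hb y)} \<subseteq> N" "N \<in> null_sets lborel"
        by (rule AE_E) (blast intro: null_setsI)
      note N = N'(2) N'(1)
      have negN: "negligible N" using null_sets_completionI[OF N(1)] negligible_iff_null_sets by blast
      have hbh: "hb y = h y" if "y \<in> {a..s} - N" for y
      proof -
        have "ha y = hb y" using that N(2) by auto
        then show ?thesis using that by (simp add: ha_def)
      qed
      have aeN1: "AE x in lborel. x \<notin> N1"
      proof -
        have "N1 \<in> null_sets lebesgue" using N1 negligible_iff_null_sets by blast
        then have "AE x in lebesgue. x \<notin> N1" by (rule AE_not_in)
        then show ?thesis by (simp add: AE_completion_iff)
      qed
      have Z': "AE x in lborel. t < x \<and> x < s \<longrightarrow>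
          integrable lborel (\<lambda>y. indicator {x<..<s} y * ((y - x) powr (- \<alpha>) * Kd (x, y) * hb y)) \<longrightarrow>
          (\<integral>y. indicator {x<..<s} y * ((y - x) powr (- \<alpha>) * Kd (x, y) * hb y) \<partial>lborel) = 0"
        using aeN1
      proof eventually_elim
        case (elim x)
        show ?case
        proof (intro impI)
          assume xs: "t < x \<and> x < s"
            and ii: "integrable lborel (\<lambda>y. indicator {x<..<s} y * ((y - x) powr (- \<alpha>) * Kd (x, y) * hb y))"
          have si: "set_integrable lborel {x<..<s} (\<lambda>y. (y - x) powr (- \<alpha>) * Kd (x, y) * hb y)"
            unfolding set_integrable_def using ii by simp
          have "(\<integral>y. indicator {x<..<s} y * ((y - x) powr (- \<alpha>) * Kd (x, y) * hb y) \<partial>lborel)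
              = (LINT y:{x<..<s}|lborel. (y - x) powr (- \<alpha>) * Kd (x, y) * hb y)"
            unfolding set_lebesgue_integral_def by simp
          also have "\<dots> = integral {x<..<s} (\<lambda>y. (y - x) powr (- \<alpha>) * Kd (x, y) * hb y)"
            by (rule set_borel_integral_eq_integral(2)[OF si])
          also have "\<dots> = integral {x..s} (\<lambda>y. (y - x) powr (- \<alpha>) * Kd (x, y) * hb y)"
            by (rule integral_open_interval_real[symmetric])
          also have "\<dots> = integral {x..s} (\<lambda>y. (y - x) powr (- \<alpha>) * K (x, y) * h y)"
          proof (rule integral_spike[OF negN])
            fix y assume y: "y \<in> {x..s} - N"
            have "(x, y) \<in> Dreg \<delta>" using y xs t ra by (intro Dreg_mem) auto
            then show "(y - x) powr (- \<alpha>) * K (x, y) * h y = (y - x) powr (- \<alpha>) * Kd (x, y) * hb y"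
              using hbh[of y] y xs t KdK by auto
          qed
          also have "\<dots> = 0" using J0[of x] xs t elim by auto
          finally show "(\<integral>y. indicator {x<..<s} y * ((y - x) powr (- \<alpha>) * Kd (x, y) * hb y) \<partial>lborel) = 0" .
        qed
      qed
      have R: "(\<integral>y. indicator {t<..<s} y * (hb y * M t y) \<partial>lborel) = 0"
        unfolding M_def by (rule fubini_abel[OF a ts Kdm KdB hbm hbi Z'])
      have Mm: "(\<lambda>y. indicator {t..s} y * M t y) \<in> borel_measurable borel"
      proof -
        have t': "t \<in> {a..s}" using t by simp
        show ?thesis using borel_measurable_continuous_on_indicator[OF _ Mcont[OF t']] by simp
      qed
      have eqi: "indicator {t<..<s} y * (hb y * M t y) = indicator {t<..<s} y * (hb y * (indicator {t..s} y * M t y))" for y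
        by (simp add: indicator_def)
      have ii: "integrable lborel (\<lambda>y. indicator {t<..<s} y * (hb y * M t y))"
      proof (rule Bochner_Integration.integrable_bound)
        show "integrable lborel (\<lambda>y. B * ?\<beta> * hb y)" using hbi by simp
        show "(\<lambda>y. indicator {t<..<s} y * (hb y * M t y)) \<in> borel_measurable lborel"
          unfolding eqi using Mm hbm by (simp add: measurable_lborel1)
        show "AE y in lborel. norm (indicator {t<..<s} y * (hb y * M t y)) \<le> norm (B * ?\<beta> * hb y)"
        proof (rule AE_I2)
          fix y
          have "\<bar>hb y * M t y\<bar> \<le> \<bar>hb y\<bar> * (B * ?\<beta>)" unfolding abs_mult using MB[of t y] by (simp add: mult_left_mono)
          then show "norm (indicator {t<..<s} y * (hb y * M t y)) \<le> norm (B * ?\<beta> * hb y)"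
            using B0 \<beta>0 by (auto simp: indicator_def abs_mult mult.commute mult.left_commute)
        qed
      qed
      have si: "set_integrable lborel {t<..<s} (\<lambda>y. hb y * M t y)"
        unfolding set_integrable_def using ii by simp
      have "integral {t..s} (\<lambda>y. M t y * h y) = integral {t..s} (\<lambda>y. hb y * M t y)"
        by (rule integral_spike[OF negN]) (use hbh t in auto)
      also have "\<dots> = integral {t<..<s} (\<lambda>y. hb y * M t y)"
        by (rule integral_open_interval_real)
      also have "\<dots> = (LINT y:{t<..<s}|lborel. hb y * M t y)"
        by (rule set_borel_integral_eq_integral(2)[OF si, symmetric])
      also have "\<dots> = 0" using R unfolding set_lebesgue_integral_def by simp
      finally show ?thesis .
    qed
  qed
qed

lemma powint:
  fixes \<alpha> :: real
  assumes "0 \<le> \<alpha>" "\<alpha> < 1"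
  shows "integrable lborel (\<lambda>v. indicator {0<..1} v * v powr (- \<alpha>))"
proof -
  have "(\<lambda>v::real. v powr (- \<alpha>)) absolutely_integrable_on {0<..1}"
    using assms by (intro nonnegative_absolutely_integrable_1 integrable_on_powr_from_0') auto
  then have "integrable lebesgue (\<lambda>v. indicator {0<..1} v * v powr (- \<alpha>))"
    unfolding set_integrable_def by simp
  moreover have "(\<lambda>v. indicator {0<..1} v * v powr (- \<alpha>)) \<in> borel_measurable lborel"
    by measurable
  ultimately show ?thesis using integrable_completion by blast
qed

lemma sub2:
  fixes g :: "real \<Rightarrow> real" and \<alpha> y :: real
  shows "(\<integral>x. indicator {0..<y} x * ((y - x) powr (- \<alpha>) * g x) \<partial>lborel)
       = (\<integral>v. indicator {0<..y} v * (v powr (- \<alpha>) * g (y - v)) \<partial>lborel)"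
    "integrable lborel (\<lambda>x. indicator {0..<y} x * ((y - x) powr (- \<alpha>) * g x))
     \<longleftrightarrow> integrable lborel (\<lambda>v. indicator {0<..y} v * (v powr (- \<alpha>) * g (y - v)))"
proof -
  define F where "F = (\<lambda>x. indicator {0..<y} x * ((y - x) powr (- \<alpha>) * g x))"
  have eq: "F (y + (-1) * v) = indicator {0<..y} v * (v powr (- \<alpha>) * g (y - v))" for v
    unfolding F_def by (auto simp: indicator_def)
  show "(\<integral>x. indicator {0..<y} x * ((y - x) powr (- \<alpha>) * g x) \<partial>lborel)
       = (\<integral>v. indicator {0<..y} v * (v powr (- \<alpha>) * g (y - v)) \<partial>lborel)"
    using lborel_integral_real_affine[of "-1" F y] unfolding F_def[symmetric] eq by simp
  show "integrable lborel (\<lambda>x. indicator {0..<y} x * ((y - x) powr (- \<alpha>) * g x))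
     \<longleftrightarrow> integrable lborel (\<lambda>v. indicator {0<..y} v * (v powr (- \<alpha>) * g (y - v)))"
    using lborel_integrable_real_affine_iff[of "-1" F y] unfolding F_def[symmetric] eq by simp
qed

lemma pow_g:
  fixes g :: "real \<Rightarrow> real" and \<alpha> y :: real
  assumes a: "0 \<le> \<alpha>" "\<alpha> < 1" and g: "g \<in> borel_measurable borel" and gB: "\<And>x. \<bar>g x\<bar> \<le> B"
    and y: "y \<le> 1"
  shows "integrable lborel (\<lambda>v. indicator {0<..y} v * (v powr (- \<alpha>) * g v))"
    "(\<integral>v. \<bar>indicator {0<..y} v * (v powr (- \<alpha>) * g v)\<bar> \<partial>lborel) \<le> B * (\<integral>v. indicator {0<..1} v * v powr (- \<alpha>) \<partial>lborel)"
proof -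
  have pi: "integrable lborel (\<lambda>v. B * (indicator {0<..1} v * v powr (- \<alpha>)))"
    using powint[OF a] by simp
  have bnd: "\<bar>indicator {0<..y} v * (v powr (- \<alpha>) * g v)\<bar> \<le> B * (indicator {0<..1} v * v powr (- \<alpha>))" for v
  proof (cases "0 < v \<and> v \<le> y")
    case True
    then have "\<bar>indicator {0<..y} v * (v powr (- \<alpha>) * g v)\<bar> = v powr (- \<alpha>) * \<bar>g v\<bar>"
      by (simp add: abs_mult)
    also have "\<dots> \<le> v powr (- \<alpha>) * B" using gB by (simp add: mult_left_mono)
    finally show ?thesis using True y by (simp add: mult.commute)
  next
    case False
    have "0 \<le> B" using gB[of 0] by simp
    then show ?thesis using False by (auto simp: indicator_def)
  qed
  show i: "integrable lborel (\<lambda>v. indicator {0<..y} v * (v powr (- \<alpha>) * g v))"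
    by (rule Bochner_Integration.integrable_bound[OF pi]) (use g bnd in \<open>auto intro!: AE_I2 order.trans[OF _ abs_ge_self]\<close>)
  have "(\<integral>v. \<bar>indicator {0<..y} v * (v powr (- \<alpha>) * g v)\<bar> \<partial>lborel) \<le> (\<integral>v. B * (indicator {0<..1} v * v powr (- \<alpha>)) \<partial>lborel)"
    by (rule integral_mono[OF _ pi]) (use i bnd in auto)
  also have "\<dots> = B * (\<integral>v. indicator {0<..1} v * v powr (- \<alpha>) \<partial>lborel)" by simp
  finally show "(\<integral>v. \<bar>indicator {0<..y} v * (v powr (- \<alpha>) * g v)\<bar> \<partial>lborel) \<le> B * (\<integral>v. indicator {0<..1} v * v powr (- \<alpha>) \<partial>lborel)" .
qed

lemma meas_test2:
  fixes G :: "real \<times> real \<Rightarrow> real" and fb :: "real \<Rightarrow> real"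
  assumes G: "G \<in> borel_measurable borel" and [measurable]: "fb \<in> borel_measurable borel"
  shows "(\<lambda>(y, x). indicator {0..1} y * fb y * (indicator {0..<y} x * ((y - x) powr (- \<alpha>) * G (x, y))))
     \<in> borel_measurable (lborel \<Otimes>\<^sub>M lborel)"
  using swapG_meas[OF G] unfolding indicator_def atLeastLessThan_iff atLeastAtMost_iff case_prod_beta by measurable

lemma sec_int:
  fixes K :: "real \<times> real \<Rightarrow> real" and f :: "real \<Rightarrow> real" and \<alpha> :: real
  assumes a: "0 \<le> \<alpha>" "\<alpha> < 1"
    and Km: "K \<in> borel_measurable (lebesgue_on Delta)" and KB: "\<And>p. p \<in> Delta \<Longrightarrow> \<bar>K p\<bar> \<le> B"
    and fi: "f absolutely_integrable_on {0..1}"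
  obtains N where "negligible N"
    "\<And>x. x \<in> {0..1} - N \<Longrightarrow> set_integrable lebesgue {x..1} (\<lambda>y. (y - x) powr (- \<alpha>) * K (x, y) * f y)"
proof -
  have B0: "0 \<le> B" using KB[of "(0, 0)"] by (auto simp: Delta_def)
  have Dcl: "closed Delta"
  proof -
    have "Delta = {p. 0 \<le> fst p \<and> fst p \<le> snd p \<and> snd p \<le> 1}" by (auto simp: Delta_def)
    moreover have "closed {p::real \<times> real. 0 \<le> fst p \<and> fst p \<le> snd p \<and> snd p \<le> 1}"
      by (intro closed_Collect_conj closed_Collect_le continuous_intros)
    ultimately show ?thesis by simp
  qed
  then have Dl: "Delta \<in> sets lebesgue" by simp
  define K0 where "K0 = (\<lambda>p. indicator Delta p *\<^sub>R K p)"
  have K0m: "K0 \<in> borel_measurable lebesgue"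
    using borel_measurable_restrict_space_iff[of Delta lebesgue K] Km Dl unfolding K0_def by simp
  obtain K' where K'm: "K' \<in> borel_measurable lborel" and K'ae: "AE p in lborel. K0 p = K' p"
    using completion_ex_borel_measurable_real[OF K0m] by blast
  define K2 where "K2 = (\<lambda>p. max (- B) (min B (K' p)))"
  have K2m: "K2 \<in> borel_measurable borel" using K'm unfolding K2_def by (simp add: measurable_lborel1)
  have K2B: "\<bar>K2 p\<bar> \<le> B" for p using B0 unfolding K2_def by auto
  have K0B: "\<bar>K0 p\<bar> \<le> B" for p using KB[of p] B0 unfolding K0_def by (auto simp: indicator_def)
  have K2ae: "AE p in lborel. K0 p = K2 p"
    using K'ae
  proof eventually_elim
    case (elim p) then show ?case using K0B[of p] unfolding K2_def by auto
  qed
  define f0 where "f0 = (\<lambda>y. indicator {0..1} y *\<^sub>R f y)"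
  have f0i: "integrable lebesgue f0" using fi unfolding f0_def set_integrable_def .
  obtain fb where fbm': "fb \<in> borel_measurable lborel" and fbae: "AE y in lborel. f0 y = fb y"
    using completion_ex_borel_measurable_real[OF borel_measurable_integrable[OF f0i]] by blast
  have fbm: "fb \<in> borel_measurable borel" using fbm' by (simp add: measurable_lborel1)
  have "integrable lebesgue fb"
    by (rule integrable_cong_AE_imp[OF f0i]) (use fbm' fbae in \<open>auto intro: measurable_completion AE_completion\<close>)
  then have fbi: "integrable lborel fb" using integrable_completion[OF fbm'] by simp
  define C where "C = (\<integral>v. indicator {0<..1} v * v powr (- \<alpha>) \<partial>lborel)"
  define \<Psi> where "\<Psi> = (\<lambda>y x. indicator {0..1} y * fb y * (indicator {0..<y} x * ((y - x) powr (- \<alpha>) * K2 (x, y))))"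
  have \<Psi>m: "(\<lambda>(y, x). \<Psi> y x) \<in> borel_measurable (lborel \<Otimes>\<^sub>M lborel)"
    unfolding \<Psi>_def using meas_test2[OF K2m fbm] by simp
  have secm: "(\<lambda>x. K2 (x, y)) \<in> borel_measurable borel" for y
    by (rule G_comp[OF K2m]) (intro continuous_intros)
  have secm2: "(\<lambda>v. K2 (y - v, y)) \<in> borel_measurable borel" for y
    by (rule G_comp[OF K2m]) (intro continuous_intros)
  have secm3: "(\<lambda>v. \<bar>K2 (y - v, y)\<bar>) \<in> borel_measurable borel" for y
    using secm2[of y] by measurable
  have inner_int: "integrable lborel (\<lambda>x. indicator {0..<y} x * ((y - x) powr (- \<alpha>) * K2 (x, y)))" if "y \<le> 1" for y
    using sub2(2)[of y \<alpha> "\<lambda>x. K2 (x, y)"] pow_g(1)[OF a secm2 K2B that] by simp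
  have inner_abs: "(\<integral>x. \<bar>indicator {0..<y} x * ((y - x) powr (- \<alpha>) * K2 (x, y))\<bar> \<partial>lborel) \<le> B * C" if "y \<le> 1" for y
  proof -
    have e1: "\<bar>indicator {0..<y} x * ((y - x) powr (- \<alpha>) * K2 (x, y))\<bar> = indicator {0..<y} x * ((y - x) powr (- \<alpha>) * \<bar>K2 (x, y)\<bar>)" for x
      by (simp add: abs_mult)
    have e2: "\<bar>indicator {0<..y} v * (v powr (- \<alpha>) * \<bar>K2 (y - v, y)\<bar>)\<bar> = indicator {0<..y} v * (v powr (- \<alpha>) * \<bar>K2 (y - v, y)\<bar>)" for v
      by (simp add: abs_mult)
    have "(\<integral>x. \<bar>indicator {0..<y} x * ((y - x) powr (- \<alpha>) * K2 (x, y))\<bar> \<partial>lborel)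
        = (\<integral>v. indicator {0<..y} v * (v powr (- \<alpha>) * \<bar>K2 (y - v, y)\<bar>) \<partial>lborel)"
      unfolding e1 by (rule sub2(1))
    also have "\<dots> \<le> B * C"
    proof -
      have gB': "\<bar>\<bar>K2 (y - v, y)\<bar>\<bar> \<le> B" for v using K2B by simp
      show ?thesis using pow_g(2)[OF a secm3[of y] gB' that] unfolding e2 C_def .
    qed
    finally show ?thesis .
  qed
  have C0: "0 \<le> C" unfolding C_def by (intro integral_nonneg_AE AE_I2) (simp add: indicator_def)
  have int1: "integrable lborel (\<lambda>y. \<integral>x. norm (\<Psi> y x) \<partial>lborel)"
  proof (rule Bochner_Integration.integrable_bound)
    show "integrable lborel (\<lambda>y. B * C * fb y)" using fbi by simp
    have "(\<lambda>(y, x). norm (\<Psi> y x)) \<in> borel_measurable (lborel \<Otimes>\<^sub>M lborel)"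
      using measurable_compose[OF \<Psi>m borel_measurable_norm] by (simp add: case_prod_beta)
    then show "(\<lambda>y. \<integral>x. norm (\<Psi> y x) \<partial>lborel) \<in> borel_measurable lborel"
      by (rule lborel.borel_measurable_lebesgue_integral)
    show "AE y in lborel. norm (\<integral>x. norm (\<Psi> y x) \<partial>lborel) \<le> norm (B * C * fb y)"
    proof (rule AE_I2)
      fix y
      have eq0: "norm (\<Psi> y x) = (indicator {0..1} y * \<bar>fb y\<bar>) * \<bar>indicator {0..<y} x * ((y - x) powr (- \<alpha>) * K2 (x, y))\<bar>" for x
        unfolding \<Psi>_def by (simp add: abs_mult)
      have eq: "(\<integral>x. norm (\<Psi> y x) \<partial>lborel) = (indicator {0..1} y * \<bar>fb y\<bar>) * (\<integral>x. \<bar>indicator {0..<y} x * ((y - x) powr (- \<alpha>) * K2 (x, y))\<bar> \<partial>lborel)"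
        unfolding eq0 by (rule integral_mult_right_zero)
      have nn: "0 \<le> (\<integral>x. \<bar>indicator {0..<y} x * ((y - x) powr (- \<alpha>) * K2 (x, y))\<bar> \<partial>lborel)" by simp
      show "norm (\<integral>x. norm (\<Psi> y x) \<partial>lborel) \<le> norm (B * C * fb y)"
      proof (cases "0 \<le> y \<and> y \<le> 1")
        case True
        then show ?thesis unfolding eq using inner_abs[of y] nn B0 C0
          by (simp add: abs_mult mult_left_mono mult.commute)
      next
        case False
        then have "indicator {0..1} y = (0::real)" by (auto simp: indicator_def)
        then show ?thesis unfolding eq by simp
      qed
    qed
  qed
  have int2: "AE y in lborel. integrable lborel (\<lambda>x. \<Psi> y x)"
  proof (rule AE_I2)
    fix y show "integrable lborel (\<lambda>x. \<Psi> y x)"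
    proof (cases "0 \<le> y \<and> y \<le> 1")
      case True
      then show ?thesis unfolding \<Psi>_def using inner_int[of y] by simp
    next
      case False
      then have "\<Psi> y x = 0" for x unfolding \<Psi>_def by (simp add: indicator_def)
      then show ?thesis by simp
    qed
  qed
  have \<Psi>i: "integrable (lborel \<Otimes>\<^sub>M lborel) (\<lambda>(y, x). \<Psi> y x)"
    by (rule lborel_pair.Fubini_integrable[OF \<Psi>m]) (use int1 int2 in simp_all)
  have swp: "integrable (lborel \<Otimes>\<^sub>M lborel) (\<lambda>(x, y). \<Psi> y x)"
    using lborel_pair.integrable_product_swap_iff[of "\<lambda>(y, x). \<Psi> y x"] \<Psi>i by simp
  have aes: "AE x in lborel. integrable lborel (\<lambda>y. \<Psi> y x)"
    using lborel_pair.AE_integrable_fst'[OF swp] by simp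
  have aeK: "AE x in lborel. AE y in lborel. K0 (x, y) = K2 (x, y)"
  proof -
    have lp: "lborel \<Otimes>\<^sub>M lborel = (lborel :: (real \<times> real) measure)" by (rule lborel_prod)
    have "AE p in lborel \<Otimes>\<^sub>M lborel. K0 p = K2 p" unfolding lp by (rule K2ae)
    from lborel_pair.AE_pair[OF this] show ?thesis .
  qed
  have main: "AE x in lborel. x \<in> {0..1} \<longrightarrow> set_integrable lebesgue {x..1} (\<lambda>y. (y - x) powr (- \<alpha>) * K (x, y) * f y)"
    using aes aeK
  proof eventually_elim
    case (elim x)
    show ?case
    proof
      assume x: "x \<in> {0..1}"
      have ae2: "AE y in lborel. indicator {x..1} y *\<^sub>R ((y - x) powr (- \<alpha>) * K (x, y) * f y) = \<Psi> y x"
        using elim(2) fbae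
      proof eventually_elim
        case (elim y)
        show ?case
        proof (cases "x < y \<and> y \<le> 1")
          case True
          have xyD: "(x, y) \<in> Delta" using True x by (auto simp: Delta_def)
          have "K2 (x, y) = K (x, y)" using elim(1) xyD by (simp add: K0_def)
          moreover have "fb y = f y" using elim(2) True x by (simp add: f0_def)
          ultimately show ?thesis using True x unfolding \<Psi>_def by (simp add: indicator_def)
        next
          case False
          then show ?thesis unfolding \<Psi>_def by (auto simp: indicator_def)
        qed
      qed
      have s1: "(\<lambda>y. \<Psi> y x) \<in> borel_measurable lborel" using elim(1) by (rule borel_measurable_integrable)
      have il: "integrable lebesgue (\<lambda>y. \<Psi> y x)" using elim(1) integrable_completion[OF s1] by simp
      have s2: "(\<lambda>y. \<Psi> y x) \<in> borel_measurable lebesgue" using s1 by (rule measurable_completion)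
      have ae3: "AE y in lebesgue. \<Psi> y x = indicator {x..1} y *\<^sub>R ((y - x) powr (- \<alpha>) * K (x, y) * f y)"
        using AE_completion[OF ae2] by (auto elim: eventually_mono)
      have s3: "(\<lambda>y. indicator {x..1} y *\<^sub>R ((y - x) powr (- \<alpha>) * K (x, y) * f y)) \<in> borel_measurable lebesgue"
        by (rule borel_measurable_AE[OF s2 ae3])
      show "set_integrable lebesgue {x..1} (\<lambda>y. (y - x) powr (- \<alpha>) * K (x, y) * f y)"
        unfolding set_integrable_def by (rule integrable_cong_AE_imp[OF il s3 ae3])
    qed
  qed
  from main obtain N where N: "{x \<in> space lborel. \<not> (x \<in> {0..1} \<longrightarrow> set_integrable lebesgue {x..1} (\<lambda>y. (y - x) powr (- \<alpha>) * K (x, y) * f y))} \<subseteq> N"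
    "N \<in> null_sets lborel"
    by (rule AE_E) (blast intro: null_setsI)
  have "negligible N" using null_sets_completionI[OF N(2)] negligible_iff_null_sets by blast
  moreover have "set_integrable lebesgue {x..1} (\<lambda>y. (y - x) powr (- \<alpha>) * K (x, y) * f y)" if "x \<in> {0..1} - N" for x
    using that N(1) by auto
  ultimately show ?thesis using that by blast
qed

lemma main_gen:
  fixes \<alpha> :: real and K :: "real \<times> real \<Rightarrow> real" and f g :: "real \<Rightarrow> real"
  assumes alpha: "0 \<le> \<alpha>" "\<alpha> < 1"
    and K_meas: "K \<in> borel_measurable (lebesgue_on Delta)"
    and K_bdd: "\<exists>B. \<forall>p\<in>Delta. \<bar>K p\<bar> \<le> B"
    and K_diag: "\<forall>x\<in>{0..1}. K (x, x) \<noteq> 0"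
    and K_lip: "\<exists>U L. open U \<and> diagonal01 \<subseteq> U \<and> L-lipschitz_on (U \<inter> Delta) K"
    and fi: "f absolutely_integrable_on {0..1}" and gi: "g absolutely_integrable_on {0..1}"
    and r: "0 \<le> r" "r < 1"
    and N0: "negligible N0" and eq: "\<And>x. x \<in> {r..1} - N0 \<Longrightarrow> IK \<alpha> K f x = IK \<alpha> K g x"
  shows "negligible {x \<in> {r..1}. f x \<noteq> g x}"
proof -
  obtain B where KB: "\<And>p. p \<in> Delta \<Longrightarrow> \<bar>K p\<bar> \<le> B" using K_bdd by blast
  obtain U L where U: "open U" "diagonal01 \<subseteq> U" and Llip: "L-lipschitz_on (U \<inter> Delta) K"
    using K_lip by blast
  have L: "0 \<le> L" using lipschitz_on_nonneg[OF Llip] .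
  have cdiag: "compact diagonal01"
  proof -
    have "diagonal01 = (\<lambda>x. (x, x)) ` {0..1}" by (auto simp: diagonal01_def)
    moreover have "compact ((\<lambda>x::real. (x, x)) ` {0..1})"
      by (intro compact_continuous_image continuous_intros) auto
    ultimately show ?thesis by simp
  qed
  obtain \<delta> where \<delta>: "\<delta> > 0" and \<delta>U: "(\<Union>x\<in>diagonal01. ball x \<delta>) \<subseteq> U"
    using compact_subset_open_imp_ball_epsilon_subset[OF cdiag U] by blast
  have DsubU: "Dreg \<delta> \<subseteq> U \<inter> Delta"
  proof
    fix p assume p: "p \<in> Dreg \<delta>"
    obtain x y where xy: "p = (x, y)" by (cases p)
    have c1: "0 \<le> x" "x \<le> y" "y \<le> 1" "y - x < \<delta>" using p xy by (auto simp: Dreg_def)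
    have "(y, y) \<in> diagonal01" using c1 by (auto simp: diagonal01_def)
    moreover have "p \<in> ball (y, y) \<delta>"
      using c1 xy by (simp add: dist_Pair_Pair dist_real_def)
    ultimately have "p \<in> U" using \<delta>U by blast
    moreover have "p \<in> Delta" using c1 xy by (simp add: Delta_def)
    ultimately show "p \<in> U \<inter> Delta" by simp
  qed
  have Klip: "\<bar>K p - K q\<bar> \<le> L * dist p q" if "p \<in> Dreg \<delta>" "q \<in> Dreg \<delta>" for p q
    using lipschitz_onD[OF Llip, of p q] that DsubU by (auto simp: dist_real_def)
  have KBD: "\<bar>K p\<bar> \<le> B" if "p \<in> Dreg \<delta>" for p
  proof -
    have "p \<in> Delta" using that DsubU by blast
    then show ?thesis by (rule KB)
  qed
  have Kcd: "continuous_on {0..1} (\<lambda>x. \<bar>K (x, x)\<bar>)"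
  proof -
    have c1: "continuous_on (U \<inter> Delta) K" using lipschitz_on_continuous_on[OF Llip] .
    have sub: "(\<lambda>x::real. (x, x)) ` {0..1} \<subseteq> U \<inter> Delta"
      using U(2) by (auto simp: diagonal01_def Delta_def)
    have c2: "continuous_on {0..1} (\<lambda>x::real. (x, x))" by (intro continuous_intros)
    have "continuous_on {0..1} (\<lambda>x. K (x, x))"
      by (rule continuous_on_compose2[OF c1 c2 sub])
    then show ?thesis by (intro continuous_intros)
  qed
  obtain x0 where x0: "x0 \<in> {0..1}" "\<And>y. y \<in> {0..1} \<Longrightarrow> \<bar>K (x0, x0)\<bar> \<le> \<bar>K (y, y)\<bar>"
    using continuous_attains_inf[OF compact_Icc _ Kcd] by auto
  define c where "c = \<bar>K (x0, x0)\<bar>"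
  have c: "0 < c" using K_diag x0 by (auto simp: c_def)
  have Kdiag: "c \<le> \<bar>K (x, x)\<bar>" if "x \<in> {0..1}" for x using x0 that by (simp add: c_def)
  obtain Nf where Nf: "negligible Nf"
    "\<And>x. x \<in> {0..1} - Nf \<Longrightarrow> set_integrable lebesgue {x..1} (\<lambda>y. (y - x) powr (- \<alpha>) * K (x, y) * f y)"
    using sec_int[OF alpha K_meas KB fi] by blast
  obtain Ng where Ng: "negligible Ng"
    "\<And>x. x \<in> {0..1} - Ng \<Longrightarrow> set_integrable lebesgue {x..1} (\<lambda>y. (y - x) powr (- \<alpha>) * K (x, y) * g y)"
    using sec_int[OF alpha K_meas KB gi] by blast
  define h where "h = (\<lambda>y. f y - g y)"
  have hi: "h absolutely_integrable_on {0..1}" unfolding h_def using set_integral_diff(1)[OF fi gi] .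
  define N1 where "N1 = N0 \<union> Nf \<union> Ng"
  have N1: "negligible N1" unfolding N1_def using N0 Nf(1) Ng(1) by auto
  have J0: "integral {x..1} (\<lambda>y. (y - x) powr (- \<alpha>) * K (x, y) * h y) = 0" if x: "x \<in> {r..1} - N1" for x
  proof (cases "x = 1")
    case True then show ?thesis by simp
  next
    case False
    then have x1: "x < 1" using x by auto
    have x01: "x \<in> {0..1}" using x r by auto
    have sf: "set_integrable lebesgue {x..1} (\<lambda>y. (y - x) powr (- \<alpha>) * K (x, y) * f y)"
      using Nf(2)[of x] x x01 by (auto simp: N1_def)
    have sg: "set_integrable lebesgue {x..1} (\<lambda>y. (y - x) powr (- \<alpha>) * K (x, y) * g y)"
      using Ng(2)[of x] x x01 by (auto simp: N1_def)
    have "IK \<alpha> K f x = IK \<alpha> K g x" using eq[of x] x by (auto simp: N1_def)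
    then have "integral {x..1} (\<lambda>y. (y - x) powr (- \<alpha>) * K (x, y) * f y)
             = integral {x..1} (\<lambda>y. (y - x) powr (- \<alpha>) * K (x, y) * g y)"
      using x1 unfolding IK_def
      by (simp add: set_lebesgue_integral_eq_integral(2)[OF sf] set_lebesgue_integral_eq_integral(2)[OF sg])
    then show ?thesis unfolding h_def
      using integral_diff[OF set_lebesgue_integral_eq_integral(1)[OF sf] set_lebesgue_integral_eq_integral(1)[OF sg]]
      by (simp add: algebra_simps)
  qed
  define \<eta> where "\<eta> = min (\<delta> / 2) (c / (8 * L + 8))"
  have \<eta>: "0 < \<eta>" "\<eta> < \<delta>" "4 * L * \<eta> < c"
  proof -
    show "0 < \<eta>" using \<delta> c L by (simp add: \<eta>_def)
    show "\<eta> < \<delta>" using \<delta> by (simp add: \<eta>_def)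
    have "\<eta> \<le> c / (8 * L + 8)" by (simp add: \<eta>_def)
    then have "4 * L * \<eta> \<le> 4 * L * (c / (8 * L + 8))" using L by (intro mult_left_mono) auto
    also have "\<dots> < c"
    proof -
      have p: "0 < 8 * L + 8" using L by simp
      have q: "0 \<le> L * c" using c L by simp
      have "4 * L * c < c * (8 * L + 8)" using c q by (simp add: algebra_simps)
      then show ?thesis using p by (simp add: pos_divide_less_eq)
    qed
    finally show "4 * L * \<eta> < c" .
  qed
  have ind: "negligible {y \<in> {max r (1 - real n * \<eta>)..1}. h y \<noteq> 0}" for n
  proof (induction n)
    case 0
    have "{y \<in> {max r (1 - real 0 * \<eta>)..1}. h y \<noteq> 0} \<subseteq> {1}" using r by auto
    then show ?case using negligible_subset negligible_sing by blast
  next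
    case (Suc n)
    define s where "s = max r (1 - real n * \<eta>)"
    define a where "a = max r (1 - real (Suc n) * \<eta>)"
    have IH: "negligible {y \<in> {s..1}. h y \<noteq> 0}" using Suc.IH unfolding s_def .
    show ?case
    proof (cases "s = r")
      case True
      then have "a = r" unfolding a_def s_def using \<eta> by (auto simp: algebra_simps)
      then show ?thesis using IH True unfolding a_def[symmetric] by simp
    next
      case False
      then have sr: "r < s" "s = 1 - real n * \<eta>" unfolding s_def by auto
      have nn: "0 \<le> real n * \<eta>" using \<eta> by simp
      have s1: "s \<le> 1" using sr(2) nn by linarith
      have e1: "real (Suc n) * \<eta> = real n * \<eta> + \<eta>" by (simp add: algebra_simps)
      have as: "a < s" "s - a \<le> \<eta>" "0 \<le> a" "s \<le> 1" "r \<le> a"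
        using sr \<eta> r s1 unfolding a_def e1 by auto
      have sa\<delta>: "s - a < \<delta>" using as \<eta> by linarith
      have small: "4 * L * (s - a) < c"
      proof -
        have "4 * L * (s - a) \<le> 4 * L * \<eta>" using as L by (intro mult_left_mono) auto
        then show ?thesis using \<eta> by linarith
      qed
      have his: "h absolutely_integrable_on {a..s}"
        by (rule absolutely_integrable_on_subinterval[OF hi]) (use as in auto)
      define Nz where "Nz = {y \<in> {s..1}. h y \<noteq> 0}"
      have J1: "integral {x..s} (\<lambda>y. (y - x) powr (- \<alpha>) * K (x, y) * h y) = 0" if x: "x \<in> {a..s} - N1" for x
      proof -
        define F where "F = (\<lambda>y. (y - x) powr (- \<alpha>) * K (x, y) * h y)"
        have "integral {x..1} F = integral {x..1} (\<lambda>y. if y \<in> {..s} then F y else 0)"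
        proof (rule integral_spike[OF IH])
          fix y assume "y \<in> {x..1} - {y \<in> {s..1}. h y \<noteq> 0}"
          then show "(if y \<in> {..s} then F y else 0) = F y" by (auto simp: F_def)
        qed
        also have "\<dots> = integral ({..s} \<inter> {x..1}) F"
          by (rule Henstock_Kurzweil_Integration.integral_restrict_Int)
        also have "{..s} \<inter> {x..1} = {x..s}" using as by auto
        finally have "integral {x..s} F = integral {x..1} F" by simp
        also have "\<dots> = 0" unfolding F_def using J0[of x] x as by auto
        finally show ?thesis unfolding F_def .
      qed
      have "negligible {y \<in> {a..s}. h y \<noteq> 0}"
      proof (cases "\<alpha> = 0")
        case True
        show ?thesis
          by (rule step_zero[OF Klip Kdiag c L as(3) as(1) as(4) sa\<delta> small his N1]) (use J1 True in auto)
      next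
        case False
        then have a0: "0 < \<alpha>" using alpha by simp
        show ?thesis
          by (rule step_pos[OF a0 alpha(2) Klip KBD Kdiag c L as(3) as(1) as(4) sa\<delta> small his N1]) (use J1 in auto)
      qed
      moreover have "{y \<in> {a..1}. h y \<noteq> 0} \<subseteq> {y \<in> {a..s}. h y \<noteq> 0} \<union> {y \<in> {s..1}. h y \<noteq> 0}" by auto
      ultimately have "negligible {y \<in> {a..1}. h y \<noteq> 0}" using IH negligible_subset negligible_Un by blast
      then show ?thesis unfolding a_def .
    qed
  qed
  obtain n :: nat where n: "1 / \<eta> \<le> real n" using real_arch_simple by blast
  have "1 \<le> real n * \<eta>" using n \<eta> by (simp add: field_simps)
  then have "max r (1 - real n * \<eta>) = r" using r by auto
  then have "negligible {y \<in> {r..1}. h y \<noteq> 0}" using ind[of n] by simp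
  then show ?thesis unfolding h_def by simp
qed

lemma int_conv:
  fixes f :: "real \<Rightarrow> real"
  assumes "integrable (lebesgue_on {0..1}) f"
  shows "f absolutely_integrable_on {0..1}"
  using assms integrable_restrict_space[of "{0..1}" lebesgue f] unfolding set_integrable_def by simp

lemma ae_neg:
  fixes S :: "real set"
  assumes "AE x in lebesgue_on S. P x" "S \<in> sets lebesgue"
  obtains N where "negligible N" "\<And>x. x \<in> S - N \<Longrightarrow> P x"
proof -
  have "AE x in lebesgue. x \<in> S \<longrightarrow> P x" using assms AE_restrict_space_iff[of S lebesgue P] by simp
  then obtain N where N: "{x \<in> space lebesgue. \<not> (x \<in> S \<longrightarrow> P x)} \<subseteq> N" "N \<in> null_sets lebesgue"
    by (rule AE_E) (blast intro: null_setsI)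
  have "negligible N" using N(2) negligible_iff_null_sets by blast
  moreover have "P x" if "x \<in> S - N" for x using that N(1) by auto
  ultimately show ?thesis using that by blast
qed

lemma neg_ae:
  fixes S :: "real set"
  assumes "negligible {x \<in> S. \<not> P x}" "S \<in> sets lebesgue"
  shows "AE x in lebesgue_on S. P x"
proof -
  have "{x \<in> S. \<not> P x} \<in> null_sets lebesgue" using assms(1) negligible_iff_null_sets by blast
  then have "AE x in lebesgue. x \<notin> {x \<in> S. \<not> P x}" by (rule AE_not_in)
  then have "AE x in lebesgue. x \<in> S \<longrightarrow> P x" by (auto elim: eventually_mono)
  then show ?thesis using assms(2) AE_restrict_space_iff[of S lebesgue P] by simp
qed

theorem theorem2p9:
  fixes \<alpha> :: real and K :: "real \<times> real \<Rightarrow> real"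
  assumes alpha: "0 \<le> \<alpha>" "\<alpha> < 1"
    and K_meas: "K \<in> borel_measurable (lebesgue_on Delta)"
    and K_bdd: "\<exists>B. \<forall>p\<in>Delta. \<bar>K p\<bar> \<le> B"
    and K_diag: "\<forall>x\<in>{0..1}. K (x, x) \<noteq> 0"
    and K_lip: "\<exists>U L. open U \<and> diagonal01 \<subseteq> U \<and> L-lipschitz_on (U \<inter> Delta) K"
  shows "(\<forall>f r. integrable (lebesgue_on {0..1}) f \<and> 0 \<le> r \<and> r < 1 \<and>
            (AE x in lebesgue_on {r..1}. IK \<alpha> K f x = 0)
            \<longrightarrow> (AE x in lebesgue_on {r..1}. f x = 0))
       \<and> (\<forall>f g. integrable (lebesgue_on {0..1}) f \<and> integrable (lebesgue_on {0..1}) g \<and>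
            (AE x in lebesgue_on {0..1}. IK \<alpha> K f x = IK \<alpha> K g x)
            \<longrightarrow> (AE x in lebesgue_on {0..1}. f x = g x))"
proof (intro conjI allI impI)
  fix f :: "real \<Rightarrow> real" and r :: real
  assume H: "integrable (lebesgue_on {0..1}) f \<and> 0 \<le> r \<and> r < 1 \<and> (AE x in lebesgue_on {r..1}. IK \<alpha> K f x = 0)"
  have fi: "f absolutely_integrable_on {0..1}" using H int_conv by blast
  have gi: "(\<lambda>_. 0::real) absolutely_integrable_on {0..1}" by simp
  obtain N where N: "negligible N" "\<And>x. x \<in> {r..1} - N \<Longrightarrow> IK \<alpha> K f x = 0"
    using ae_neg[where S="{r..1}" and P="\<lambda>x. IK \<alpha> K f x = 0"] H by auto
  have z: "IK \<alpha> K (\<lambda>_. 0) x = 0" for x by (simp add: IK_def)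
  have "negligible {x \<in> {r..1}. f x \<noteq> 0}"
    using main_gen[OF alpha K_meas K_bdd K_diag K_lip fi gi _ _ N(1), of r] H N(2) z by auto
  then show "AE x in lebesgue_on {r..1}. f x = 0" by (intro neg_ae) auto
next
  fix f g :: "real \<Rightarrow> real"
  assume H: "integrable (lebesgue_on {0..1}) f \<and> integrable (lebesgue_on {0..1}) g \<and>
            (AE x in lebesgue_on {0..1}. IK \<alpha> K f x = IK \<alpha> K g x)"
  have fi: "f absolutely_integrable_on {0..1}" using H int_conv by blast
  have gi: "g absolutely_integrable_on {0..1}" using H int_conv by blast
  obtain N where N: "negligible N" "\<And>x. x \<in> {0..1} - N \<Longrightarrow> IK \<alpha> K f x = IK \<alpha> K g x"
    using ae_neg[where S="{0..1}" and P="\<lambda>x. IK \<alpha> K f x = IK \<alpha> K g x"] H by auto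
  have "negligible {x \<in> {0..1}. f x \<noteq> g x}"
    using main_gen[OF alpha K_meas K_bdd K_diag K_lip fi gi _ _ N(1), of 0] N(2) by auto
  then show "AE x in lebesgue_on {0..1}. f x = g x" by (intro neg_ae) auto
qed

end
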